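(* Assume $\mathsf{CH}$. Then there are a $P$-point ultrafilter $U$ on $\omega$ and a tight gap $\mathcal{G}$ such that the space $X_\mathcal{G}$ is $L$-selective but not $U$-selective.
   Context: A tight gap is a sequence $\mathcal{G}=\langle A_\alpha,B_\alpha:\alpha<\omega_1\rangle$ of infinite subsets of $\omega$ such that for all $\alpha<\beta$, $A_\alpha\subseteq^*A_\beta$, $B_\beta\subseteq^*B_\alpha$ and $A_\beta\subseteq^*B_\alpha$; if $E\subseteq^*B_\alpha$ for all $\alpha$ then $E\subseteq^*A_\beta$ for some $\beta$; and if $E\supseteq^*A_\alpha$ for all $\alpha$ then $E\supseteq^*B_\beta$ for some $\beta$ ($\subseteq^*$ is inclusion modulo finite). $X_\mathcal{G}$ is the space on $\omega\cup\{\infty\}$ with points of $\omega$ isolated and the neighborhood filter of $\infty$ generated by the sets $B_\alpha\cup\{\infty\}$. An ultrafilter $U$ on $\omega$ is a $P$-point if every function $\omega\rightarrow\omega$ is constant or finite-to-one on a set in $U$. $\mathcal{F}(X)$ is the set of nonempty closed subsets of $X$; $\varphi:Y\rightarrow\mathcal{F}(X)$ is lower semicontinuous if for every open $W\subseteq X$, $\{y:\varphi(y)\cap W\neq\emptyset\}$ is open. $X$ is $Y$-selective if every lower semicontinuous $\varphi:Y\rightarrow\mathcal{F}(X)$ has a continuous selection $s:Y\to X$ with $s(y)\in\varphi(y)$. $L$-selective means $(\omega+1)$-selective ($\omega+1$ a convergent sequence). $Y_U$ is the space on $\omega\cup\{\infty\}$ with points of $\omega$ isolated and neighborhoods of $\infty$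 the sets $A\cup\{\infty\}$, $A\in U$; $U$-selective means $Y_U$-selective. *)

theory Defs
  imports "HOL-Analysis.Analysis"
begin

abbreviation omega1 :: "(nat set \<times> nat set) set" where
  "omega1 \<equiv> cardSuc natLeq"

abbreviation olt :: "nat set \<Rightarrow> nat set \<Rightarrow> bool" where
  "olt a b \<equiv> (a, b) \<in> omega1 \<and> a \<noteq> b"

definition CH :: bool where
  "CH \<longleftrightarrow> (card_of (UNIV :: nat set set), omega1) \<in> ordIso"

definition almost_subset :: "nat set \<Rightarrow> nat set \<Rightarrow> bool" where
  "almost_subset A B \<longleftrightarrow> finite (A - B)"

definition tight_gap :: "(nat set \<Rightarrow> nat set) \<Rightarrow> (nat set \<Rightarrow> nat set) \<Rightarrow> bool" where
  "tight_gap A B \<longleftrightarrow>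
     (\<forall>a\<in>Field omega1. infinite (A a) \<and> infinite (B a)) \<and>
     (\<forall>a\<in>Field omega1. \<forall>b\<in>Field omega1. olt a b \<longrightarrow>
         almost_subset (A a) (A b) \<and> almost_subset (B b) (B a) \<and> almost_subset (A b) (B a)) \<and>
     (\<forall>E. (\<forall>a\<in>Field omega1. almost_subset E (B a)) \<longrightarrow>
          (\<exists>b\<in>Field omega1. almost_subset E (A b))) \<and>
     (\<forall>E. (\<forall>a\<in>Field omega1. almost_subset (A a) E) \<longrightarrow>
          (\<exists>b\<in>Field omega1. almost_subset (B b) E))"

text \<open>Points of omega are Some n, the point infinity is None.\<close>
definition gap_space :: "(nat set \<Rightarrow> nat set) \<Rightarrow> nat option topology" where
  "gap_space B = topology (\<lambda>V. None \<in> V \<longrightarrow>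
     (\<exists>F. finite F \<and> F \<noteq> {} \<and> F \<subseteq> Field omega1 \<and>
          (\<Inter>a\<in>F. insert None (Some ` B a)) \<subseteq> V))"

definition filter_space :: "nat set set \<Rightarrow> nat option topology" where
  "filter_space U = topology (\<lambda>V. None \<in> V \<longrightarrow> (\<exists>A\<in>U. insert None (Some ` A) \<subseteq> V))"

text \<open>omega+1: neighbourhoods of infinity are the cofinite sets.\<close>
definition conv_seq :: "nat option topology" where
  "conv_seq = filter_space {A. finite (- A)}"

definition ultrafilter_on_nat :: "nat set set \<Rightarrow> bool" where
  "ultrafilter_on_nat U \<longleftrightarrow> {} \<notin> U \<and> UNIV \<in> U \<and>
     (\<forall>A B. A \<in> U \<and> A \<subseteq> B \<longrightarrow> B \<in> U) \<and>
     (\<forall>A B. A \<in> U \<and> B \<in> U \<longrightarrow> A \<inter> B \<in> U) \<and>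
     (\<forall>A. A \<in> U \<or> - A \<in> U)"

definition free_ultrafilter_on_nat :: "nat set set \<Rightarrow> bool" where
  "free_ultrafilter_on_nat U \<longleftrightarrow> ultrafilter_on_nat U \<and> (\<forall>A\<in>U. infinite A)"

definition P_point :: "nat set set \<Rightarrow> bool" where
  "P_point U \<longleftrightarrow> free_ultrafilter_on_nat U \<and>
     (\<forall>f :: nat \<Rightarrow> nat. \<exists>A\<in>U. (\<exists>c. \<forall>n\<in>A. f n = c) \<or> (\<forall>m. finite {n\<in>A. f n = m}))"

definition lsc :: "'b topology \<Rightarrow> 'a topology \<Rightarrow> ('b \<Rightarrow> 'a set) \<Rightarrow> bool" where
  "lsc Y X \<phi> \<longleftrightarrow>
     (\<forall>y\<in>topspace Y. \<phi> y \<noteq> {} \<and> closedin X (\<phi> y)) \<and>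
     (\<forall>W. openin X W \<longrightarrow> openin Y {y \<in> topspace Y. \<phi> y \<inter> W \<noteq> {}})"

definition selective :: "'b topology \<Rightarrow> 'a topology \<Rightarrow> bool" where
  "selective Y X \<longleftrightarrow> (\<forall>\<phi>. lsc Y X \<phi> \<longrightarrow>
     (\<exists>s. continuous_map Y X s \<and> (\<forall>y\<in>topspace Y. s y \<in> \<phi> y)))"

end

theory Submission
  imports Defs "HOL-Library.Countable_Set_Type"
begin

unbundle cardinal_syntax

lemma o1_Card: "Card_order omega1"
  by (simp add: cardSuc_Card_order natLeq_Card_order)

lemma o1_wo: "Well_order omega1"
  using o1_Card card_order_on_def by blast

lemma o1_worel: "wo_rel omega1"
  using o1_wo wo_rel_def by blast

lemma o1_underS_countable:
  assumes "a \<in> Field omega1" shows "countable (underS omega1 a)"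
proof -
  have "|underS omega1 a| <o omega1" using card_of_underS[OF o1_Card assms] .
  hence "|underS omega1 a| \<le>o natLeq"
    using cardSuc_ordLeq_ordLess[OF natLeq_Card_order card_of_Card_order] by blast
  thus ?thesis using countable_card_le_natLeq by blast
qed

lemma o1_Field_uncountable: "\<not> countable (Field omega1)"
proof
  assume "countable (Field omega1)"
  hence "|Field omega1| \<le>o natLeq" using countable_card_le_natLeq by blast
  moreover have "|Field omega1| =o omega1" using card_of_Field_ordIso[OF o1_Card] .
  ultimately have "omega1 \<le>o natLeq"
    using ordIso_ordLeq_trans ordIso_symmetric by blast
  moreover have "natLeq <o omega1" using cardSuc_greater natLeq_Card_order by blast
  ultimately show False using not_ordLess_ordLeq by blast
qed

lemma o1_total: "a \<in> Field omega1 \<Longrightarrow> b \<in> Field omega1 \<Longrightarrow> (a,b) \<in> omega1 \<or> (b,a) \<in> omega1"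
  using o1_worel wo_rel.TOTALS by blast

lemma o1_refl: "a \<in> Field omega1 \<Longrightarrow> (a,a) \<in> omega1"
  using o1_wo unfolding well_order_on_def linear_order_on_def partial_order_on_def preorder_on_def refl_on_def by blast

lemma o1_trans: "(a,b) \<in> omega1 \<Longrightarrow> (b,c) \<in> omega1 \<Longrightarrow> (a,c) \<in> omega1"
  using o1_worel wo_rel.TRANS trans_def by metis

lemma o1_antisym: "(a,b) \<in> omega1 \<Longrightarrow> (b,a) \<in> omega1 \<Longrightarrow> a = b"
  using o1_worel wo_rel.ANTISYM antisym_def by metis

lemma o1_bounded:
  assumes "countable S" "S \<subseteq> Field omega1"
  shows "\<exists>a\<in>Field omega1. S \<subseteq> underS omega1 a"
proof (rule ccontr)
  assume H: "\<not> ?thesis"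
  have "Field omega1 \<subseteq> (\<Union>x\<in>S. insert x (underS omega1 x))"
  proof
    fix a assume a: "a \<in> Field omega1"
    then obtain x where x: "x \<in> S" "x \<notin> underS omega1 a" using H by blast
    hence xF: "x \<in> Field omega1" using assms by blast
    have "x = a \<or> (a,x) \<in> omega1 \<and> a \<noteq> x"
      using o1_total[OF a xF] x(2) unfolding underS_def by auto
    thus "a \<in> (\<Union>x\<in>S. insert x (underS omega1 x))"
      using x(1) unfolding underS_def by auto
  qed
  moreover have "countable (\<Union>x\<in>S. insert x (underS omega1 x))"
    using assms by (intro countable_UN) (auto intro!: o1_underS_countable)
  ultimately show False using o1_Field_uncountable countable_subset by blast
qed

lemma o1_underS_Field: "underS omega1 a \<subseteq> Field omega1"
  unfolding underS_def Field_def by auto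

lemma o1_underS_trans: "b \<in> underS omega1 a \<Longrightarrow> c \<in> underS omega1 b \<Longrightarrow> c \<in> underS omega1 a"
  unfolding underS_def using o1_trans o1_antisym by blast

lemma o1_recursion:
  fixes good :: "(nat set \<Rightarrow> 'b) \<Rightarrow> nat set \<Rightarrow> 'b \<Rightarrow> bool"
  assumes local: "\<And>h h' a v. a \<in> Field omega1 \<Longrightarrow> (\<forall>x\<in>underS omega1 a. h x = h' x) \<Longrightarrow> good h a v = good h' a v"
  assumes ex: "\<And>h a. a \<in> Field omega1 \<Longrightarrow> (\<forall>x\<in>underS omega1 a. good h x (h x)) \<Longrightarrow> \<exists>v. good h a v"
  shows "\<exists>h. \<forall>a\<in>Field omega1. good h a (h a)"
proof -
  define H where "H = (\<lambda>h a. SOME v. (a \<in> Field omega1 \<and> (\<forall>x\<in>underS omega1 a. good h x (h x))) \<longrightarrow> good h a v)"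
  have adm: "wo_rel.adm_wo omega1 H"
    unfolding wo_rel.adm_wo_def[OF o1_worel]
  proof (intro allI impI)
    fix f g :: "nat set \<Rightarrow> 'b" and x
    assume fg: "\<forall>y\<in>underS omega1 x. f y = g y"
    show "H f x = H g x"
    proof (cases "x \<in> Field omega1")
      case True
      have "(\<forall>y\<in>underS omega1 x. good f y (f y)) = (\<forall>y\<in>underS omega1 x. good g y (g y))"
      proof -
        { fix y assume y: "y \<in> underS omega1 x"
          have yF: "y \<in> Field omega1" using y o1_underS_Field by blast
          have "\<forall>z\<in>underS omega1 y. f z = g z" using fg y o1_underS_trans by blast
          hence "good f y (f y) = good g y (f y)" using local[OF yF] by blast
          hence "good f y (f y) = good g y (g y)" using fg y by simp }
        thus ?thesis by blast
      qed
      moreover have "\<And>v. good f x v = good g x v" using local[OF True fg] by blast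
      ultimately show ?thesis unfolding H_def by simp
    next
      case False thus ?thesis unfolding H_def by simp
    qed
  qed
  define h where "h = wo_rel.worec omega1 H"
  have hfix: "h = H h" unfolding h_def using wo_rel.worec_fixpoint[OF o1_worel adm] .
  have "\<forall>a. a \<in> Field omega1 \<longrightarrow> good h a (h a)"
  proof (intro allI)
    fix a
    show "a \<in> Field omega1 \<longrightarrow> good h a (h a)"
    proof (induct a rule: wo_rel.well_order_induct[OF o1_worel])
      case (1 x)
      show ?case
      proof
        assume xF: "x \<in> Field omega1"
        have IH: "\<forall>y\<in>underS omega1 x. good h y (h y)"
          using 1 o1_underS_Field unfolding underS_def by blast
        obtain v where "good h x v" using ex[OF xF IH] by blast
        hence "\<exists>v. (x \<in> Field omega1 \<and> (\<forall>y\<in>underS omega1 x. good h y (h y))) \<longrightarrow> good h x v" by blast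
        hence "(x \<in> Field omega1 \<and> (\<forall>y\<in>underS omega1 x. good h y (h y))) \<longrightarrow> good h x (H h x)"
          unfolding H_def by (rule someI_ex)
        hence "good h x (H h x)" using xF IH by blast
        thus "good h x (h x)" using hfix by metis
      qed
    qed
  qed
  thus ?thesis by blast
qed


section \<open>Almost inclusion\<close>

lemma as_refl[simp]: "almost_subset A A" unfolding almost_subset_def by simp
lemma as_subset: "A \<subseteq> B \<Longrightarrow> almost_subset A B" unfolding almost_subset_def
  by (metis Diff_eq_empty_iff finite.emptyI)
lemma as_trans: "almost_subset A B \<Longrightarrow> almost_subset B C \<Longrightarrow> almost_subset A C"
  unfolding almost_subset_def by (rule finite_subset[of _ "(A - B) \<union> (B - C)"]) auto
lemma as_Un: "almost_subset A C \<Longrightarrow> almost_subset B C \<Longrightarrow> almost_subset (A \<union> B) C"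
  unfolding almost_subset_def by (simp add: Un_Diff)
lemma as_Int: "almost_subset A B \<Longrightarrow> almost_subset A C \<Longrightarrow> almost_subset A (B \<inter> C)"
  unfolding almost_subset_def by (rule finite_subset[of _ "(A - B) \<union> (A - C)"]) auto
lemma as_fin: "finite A \<Longrightarrow> almost_subset A B" unfolding almost_subset_def by simp
lemma as_diff: "finite K \<Longrightarrow> almost_subset A (A - K)" unfolding almost_subset_def
  by (rule finite_subset[of _ K]) auto
lemma as_diff2: "finite K \<Longrightarrow> almost_subset A B \<Longrightarrow> almost_subset A (B - K)"
  using as_diff as_trans by blast
lemma as_mono1: "A' \<subseteq> A \<Longrightarrow> almost_subset A B \<Longrightarrow> almost_subset A' B"
  using as_subset as_trans by blast
lemma as_mono2: "B \<subseteq> B' \<Longrightarrow> almost_subset A B \<Longrightarrow> almost_subset A B'"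
  using as_subset as_trans by blast
lemma as_infinite: "almost_subset A B \<Longrightarrow> infinite A \<Longrightarrow> infinite B"
  unfolding almost_subset_def by (metis Diff_infinite_finite finite_Diff2)

section \<open>Ultrafilters\<close>

definition fu :: "nat set set \<Rightarrow> bool" where "fu U = free_ultrafilter_on_nat U"

lemma fu_mono: "fu U \<Longrightarrow> A \<in> U \<Longrightarrow> A \<subseteq> B \<Longrightarrow> B \<in> U"
  unfolding fu_def free_ultrafilter_on_nat_def ultrafilter_on_nat_def by blast
lemma fu_Int: "fu U \<Longrightarrow> A \<in> U \<Longrightarrow> B \<in> U \<Longrightarrow> A \<inter> B \<in> U"
  unfolding fu_def free_ultrafilter_on_nat_def ultrafilter_on_nat_def by blast
lemma fu_empty: "fu U \<Longrightarrow> {} \<notin> U"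
  unfolding fu_def free_ultrafilter_on_nat_def ultrafilter_on_nat_def by blast
lemma fu_UNIV: "fu U \<Longrightarrow> UNIV \<in> U"
  unfolding fu_def free_ultrafilter_on_nat_def ultrafilter_on_nat_def by blast
lemma fu_inf: "fu U \<Longrightarrow> A \<in> U \<Longrightarrow> infinite A"
  unfolding fu_def free_ultrafilter_on_nat_def by blast
lemma fu_compl: "fu U \<Longrightarrow> (A \<notin> U) = (- A \<in> U)"
proof -
  assume u: "fu U"
  have "A \<in> U \<or> - A \<in> U" using u unfolding fu_def free_ultrafilter_on_nat_def ultrafilter_on_nat_def by blast
  moreover have "\<not> (A \<in> U \<and> - A \<in> U)" using fu_Int[OF u, of A "-A"] fu_empty[OF u] by auto
  ultimately show ?thesis by blast
qed
lemma fu_fin: "fu U \<Longrightarrow> finite A \<Longrightarrow> A \<notin> U" using fu_inf by blast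
lemma fu_Un: "fu U \<Longrightarrow> A \<notin> U \<Longrightarrow> B \<notin> U \<Longrightarrow> A \<union> B \<notin> U"
proof -
  assume u: "fu U" "A \<notin> U" "B \<notin> U"
  hence "-A \<inter> -B \<in> U" using fu_compl fu_Int by blast
  thus ?thesis using u(1) fu_compl by (metis compl_sup)
qed
lemma fu_sub_notin: "fu U \<Longrightarrow> A \<notin> U \<Longrightarrow> B \<subseteq> A \<Longrightarrow> B \<notin> U" using fu_mono by blast
lemma fu_disj: "fu U \<Longrightarrow> A \<inter> B = {} \<Longrightarrow> A \<notin> U \<or> B \<notin> U" using fu_Int fu_empty by metis
lemma fu_almost: "fu U \<Longrightarrow> A \<in> U \<Longrightarrow> almost_subset A B \<Longrightarrow> B \<in> U"
proof -
  assume u: "fu U" "A \<in> U" "almost_subset A B"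
  hence "- (A - B) \<in> U" using fu_fin fu_compl unfolding almost_subset_def by blast
  hence "A \<inter> - (A - B) \<in> U" using u fu_Int by blast
  thus ?thesis using u(1) fu_mono by blast
qed
lemma fu_diff_fin: "fu U \<Longrightarrow> A \<in> U \<Longrightarrow> finite F \<Longrightarrow> A - F \<in> U"
  using fu_almost as_diff by blast
lemma fu_cofin: "fu U \<Longrightarrow> finite (- A) \<Longrightarrow> A \<in> U"
  using fu_diff_fin[of U UNIV "-A"] fu_UNIV by (simp add: Diff_Compl)
lemma fu_split: "fu U \<Longrightarrow> infinite S \<Longrightarrow> \<exists>S'\<subseteq>S. infinite S' \<and> S' \<notin> U"
proof -
  assume u: "fu U" and S: "infinite S"
  obtain f :: "nat \<Rightarrow> nat" where f: "inj f" "range f \<subseteq> S" using infinite_countable_subset[OF S] by blast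
  let ?E = "range (\<lambda>n. f (2*n))" and ?O = "range (\<lambda>n. f (2*n+1))"
  have "inj (\<lambda>n. f (2*n))" unfolding inj_def
  proof (intro allI impI)
    fix x y :: nat assume "f (2*x) = f (2*y)"
    hence "2*x = 2*y" using f(1) unfolding inj_def by blast
    thus "x = y" by simp
  qed
  hence iE: "infinite ?E" using range_inj_infinite by blast
  have "inj (\<lambda>n. f (2*n+1))" unfolding inj_def
  proof (intro allI impI)
    fix x y :: nat assume "f (2*x+1) = f (2*y+1)"
    hence "2*x+1 = 2*y+1" using f(1) unfolding inj_def by blast
    thus "x = y" by simp
  qed
  hence iO: "infinite ?O" using range_inj_infinite by blast
  have "?E \<inter> ?O = {}"
  proof (rule ccontr)
    assume "?E \<inter> ?O \<noteq> {}"
    then obtain a b where "f (2*a) = f (2*b+1)" by blast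
    hence "2*a = 2*b+1" using f(1) unfolding inj_def by blast
    thus False by presburger
  qed
  hence "?E \<notin> U \<or> ?O \<notin> U" using fu_disj[OF u] by blast
  moreover have "?E \<subseteq> S" using f(2) by auto
  moreover have "?O \<subseteq> S" using f(2) by auto
  ultimately show ?thesis using iE iO by metis
qed

lemma pp_fu: "P_point U \<Longrightarrow> fu U" unfolding P_point_def fu_def by blast

lemma pp_pseudo:
  fixes Y :: "nat \<Rightarrow> nat set"
  assumes pp: "P_point U" and Y: "\<And>i. Y i \<in> U"
  shows "\<exists>Z\<in>U. \<forall>i. finite (Z - Y i)"
proof (cases "(\<Inter>i. Y i) \<in> U")
  case True
  have "\<forall>i. (\<Inter>i. Y i) - Y i = {}" by blast
  thus ?thesis using True by (metis finite.emptyI)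
next
  case False
  have u: "fu U" using pp pp_fu by blast
  define D where "D = - (\<Inter>i. Y i)"
  have D: "D \<in> U" using False u fu_compl D_def by blast
  define g where "g = (\<lambda>x. LEAST i. x \<notin> Y i)"
  have gD: "x \<in> D \<Longrightarrow> x \<notin> Y (g x) \<and> (\<forall>i. x \<notin> Y i \<longrightarrow> g x \<le> i)" for x
  proof -
    assume "x \<in> D"
    then obtain i0 where "x \<notin> Y i0" unfolding D_def by blast
    thus ?thesis unfolding g_def by (metis LeastI Least_le)
  qed
  obtain A where A: "A \<in> U" "(\<exists>c. \<forall>n\<in>A. g n = c) \<or> (\<forall>m. finite {n\<in>A. g n = m})"
    using pp unfolding P_point_def by blast
  show ?thesis
  proof (cases "\<exists>c. \<forall>n\<in>A. g n = c")
    case True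
    then obtain c where c: "\<forall>n\<in>A. g n = c" by blast
    have "A \<inter> D \<inter> Y c \<in> U" using A(1) D Y fu_Int[OF u] by blast
    then obtain x where "x \<in> A \<inter> D \<inter> Y c" using fu_empty[OF u] by (metis equals0I)
    thus ?thesis using c gD by auto
  next
    case False
    hence fin: "\<forall>m. finite {n\<in>A. g n = m}" using A(2) by blast
    show ?thesis
    proof (intro bexI[of _ "A \<inter> D"] allI)
      fix i
      have "A \<inter> D - Y i \<subseteq> (\<Union>m\<in>{..i}. {n\<in>A. g n = m})" using gD by fastforce
      thus "finite (A \<inter> D - Y i)" using fin by (meson finite_UN_I finite_atMost finite_subset)
    qed (use A D fu_Int[OF u] in blast)
  qed
qed

section \<open>Columns\<close>

definition col :: "nat \<Rightarrow> nat" where "col x = fst (prod_decode x)"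
definition rowof :: "nat \<Rightarrow> nat" where "rowof x = snd (prod_decode x)"
definition pt :: "nat \<Rightarrow> nat \<Rightarrow> nat" where "pt n m = prod_encode (n, m)"
definition colset :: "nat \<Rightarrow> nat set" where "colset n = {x. col x = n}"

lemma col_pt[simp]: "col (pt n m) = n" unfolding col_def pt_def by simp
lemma row_pt[simp]: "rowof (pt n m) = m" unfolding rowof_def pt_def by simp
lemma pt_colrow[simp]: "pt (col x) (rowof x) = x" unfolding col_def rowof_def pt_def by simp
lemma pt_inj[simp]: "(pt n m = pt n' m') = (n = n' \<and> m = m')" unfolding pt_def
  by (metis prod.inject prod_encode_eq)
lemma colset_iff[simp]: "(x \<in> colset n) = (col x = n)" unfolding colset_def by simp

definition colfin :: "nat set \<Rightarrow> bool" where "colfin S \<longleftrightarrow> (\<forall>n. finite (S \<inter> colset n))"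
definition csz :: "nat set \<Rightarrow> nat \<Rightarrow> nat" where "csz S n = card (S \<inter> colset n)"
definition bigU :: "nat set set \<Rightarrow> nat set \<Rightarrow> bool" where "bigU U S \<longleftrightarrow> (\<forall>m. {n. m \<le> csz S n} \<in> U)"

lemma colfin_subset: "colfin S \<Longrightarrow> T \<subseteq> S \<Longrightarrow> colfin T"
  unfolding colfin_def by (meson Int_mono finite_subset order_refl)
lemma colfin_Un: "colfin S \<Longrightarrow> colfin T \<Longrightarrow> colfin (S \<union> T)"
  unfolding colfin_def by (simp add: Int_Un_distrib2)
lemma colfin_fin: "finite S \<Longrightarrow> colfin S" unfolding colfin_def by simp
lemma colfin_almost: "colfin T \<Longrightarrow> almost_subset S T \<Longrightarrow> colfin S"
  unfolding almost_subset_def colfin_def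
proof
  fix n assume "\<forall>n. finite (T \<inter> colset n)" "finite (S - T)"
  hence "finite ((T \<inter> colset n) \<union> (S - T))" by blast
  moreover have "S \<inter> colset n \<subseteq> (T \<inter> colset n) \<union> (S - T)" by blast
  ultimately show "finite (S \<inter> colset n)" using finite_subset by blast
qed

lemma csz_mono: "colfin T \<Longrightarrow> S \<subseteq> T \<Longrightarrow> csz S n \<le> csz T n"
  unfolding csz_def colfin_def by (meson Int_mono card_mono order_refl)

lemma csz_diff: "colfin S \<Longrightarrow> finite K \<Longrightarrow> csz S n \<le> csz (S - K) n + card K"
proof -
  assume S: "colfin S" and K: "finite K"
  have "S \<inter> colset n \<subseteq> ((S - K) \<inter> colset n) \<union> K" by auto
  moreover have "finite ((S - K) \<inter> colset n)" using S unfolding colfin_def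
    by (metis Diff_Int_distrib2 finite_Diff)
  ultimately have "card (S \<inter> colset n) \<le> card (((S - K) \<inter> colset n) \<union> K)"
    using K by (intro card_mono) auto
  also have "\<dots> \<le> card ((S - K) \<inter> colset n) + card K" by (rule card_Un_le)
  finally show ?thesis unfolding csz_def .
qed

lemma bigU_diff_fin:
  assumes u: "fu U" and S: "colfin S" "bigU U S" and K: "finite K"
  shows "bigU U (S - K)"
  unfolding bigU_def
proof
  fix m
  have "{n. m + card K \<le> csz S n} \<in> U" using S unfolding bigU_def by blast
  moreover have "{n. m + card K \<le> csz S n} \<subseteq> {n. m \<le> csz (S - K) n}"
  proof
    fix n assume "n \<in> {n. m + card K \<le> csz S n}"
    thus "n \<in> {n. m \<le> csz (S - K) n}" using csz_diff[OF S(1) K, of n] by simp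
  qed
  ultimately show "{n. m \<le> csz (S - K) n} \<in> U" using fu_mono[OF u] by blast
qed

lemma bigU_diff_cols:
  assumes u: "fu U" and S: "bigU U S" and R: "col ` R \<notin> U"
  shows "bigU U (S - R)"
  unfolding bigU_def
proof
  fix m
  have "{n. m \<le> csz S n} \<inter> - (col ` R) \<in> U" using S R u fu_compl fu_Int unfolding bigU_def by blast
  moreover have "{n. m \<le> csz S n} \<inter> - (col ` R) \<subseteq> {n. m \<le> csz (S - R) n}"
  proof
    fix n assume n: "n \<in> {n. m \<le> csz S n} \<inter> - (col ` R)"
    hence "(S - R) \<inter> colset n = S \<inter> colset n" by auto
    thus "n \<in> {n. m \<le> csz (S - R) n}" using n unfolding csz_def by simp
  qed
  ultimately show "{n. m \<le> csz (S - R) n} \<in> U" using fu_mono[OF u] by blast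
qed

lemma bigU_diff_k:
  assumes u: "fu U" and S: "colfin S" "bigU U S" and R: "\<And>n. finite (R \<inter> colset n) \<and> card (R \<inter> colset n) \<le> k"
  shows "bigU U (S - R)"
  unfolding bigU_def
proof
  fix m
  have "{n. m + k \<le> csz S n} \<in> U" using S unfolding bigU_def by blast
  moreover have "{n. m + k \<le> csz S n} \<subseteq> {n. m \<le> csz (S - R) n}"
  proof
    fix n assume n: "n \<in> {n. m + k \<le> csz S n}"
    have "S \<inter> colset n \<subseteq> ((S - R) \<inter> colset n) \<union> (R \<inter> colset n)" by auto
    moreover have "finite ((S - R) \<inter> colset n)" using S unfolding colfin_def
      by (metis Diff_Int_distrib2 finite_Diff)
    ultimately have "card (S \<inter> colset n) \<le> card (((S - R) \<inter> colset n) \<union> (R \<inter> colset n))"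
      using R[of n] by (intro card_mono) auto
    also have "\<dots> \<le> card ((S - R) \<inter> colset n) + card (R \<inter> colset n)" by (rule card_Un_le)
    finally show "n \<in> {n. m \<le> csz (S - R) n}" using n R[of n] unfolding csz_def by simp
  qed
  ultimately show "{n. m \<le> csz (S - R) n} \<in> U" using fu_mono[OF u] by blast
qed

lemma bigU_diff_col:
  assumes u: "fu U" and S: "bigU U S"
  shows "bigU U (S - colset c)"
proof -
  have "col ` colset c \<subseteq> {c}" by auto
  hence "col ` colset c \<notin> U" using fu_fin[OF u, of "{c}"] fu_sub_notin[OF u] by blast
  thus ?thesis using bigU_diff_cols[OF u S] by blast
qed

lemma bigU_nonempty:
  assumes u: "fu U" and S: "colfin S" "bigU U S" and K: "finite K"
  shows "{n. (S - K) \<inter> colset n \<noteq> {}} \<in> U"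
proof -
  have "bigU U (S - K)" using bigU_diff_fin[OF u S K] .
  hence "{n. 1 \<le> csz (S - K) n} \<in> U" unfolding bigU_def by blast
  moreover have "{n. 1 \<le> csz (S - K) n} \<subseteq> {n. (S - K) \<inter> colset n \<noteq> {}}"
    unfolding csz_def by (auto simp: card_gt_0_iff[symmetric])
  ultimately show ?thesis using fu_mono[OF u] by blast
qed

lemma bigU_mono: "fu U \<Longrightarrow> colfin T \<Longrightarrow> bigU U S \<Longrightarrow> S \<subseteq> T \<Longrightarrow> bigU U T"
  unfolding bigU_def
proof
  fix m assume a: "fu U" "colfin T" "\<forall>m. {n. m \<le> csz S n} \<in> U" "S \<subseteq> T"
  have "{n. m \<le> csz S n} \<subseteq> {n. m \<le> csz T n}" using csz_mono[OF a(2) a(4)] order_trans by blast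
  thus "{n. m \<le> csz T n} \<in> U" using a fu_mono by blast
qed


unbundle cardinal_syntax

lemma CH_bij: assumes "CH" shows "\<exists>e. bij_betw e (Field omega1) (UNIV :: nat set set)"
proof -
  have "|UNIV :: nat set set| =o omega1" using assms unfolding CH_def by simp
  moreover have "|Field omega1| =o omega1" using card_of_Field_ordIso[OF o1_Card] .
  ultimately have "|Field omega1| =o |UNIV :: nat set set|"
    using ordIso_symmetric ordIso_transitive by blast
  thus ?thesis using card_of_ordIso by blast
qed

lemma o1_cases: "x \<in> Field omega1 \<Longrightarrow> y \<in> Field omega1 \<Longrightarrow> x = y \<or> x \<in> underS omega1 y \<or> y \<in> underS omega1 x"
proof -
  assume "x \<in> Field omega1" "y \<in> Field omega1"
  hence "(x,y) \<in> omega1 \<or> (y,x) \<in> omega1" by (rule o1_total)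
  thus ?thesis unfolding underS_def by blast
qed

definition aschain :: "nat set set \<Rightarrow> bool" where
  "aschain F \<longleftrightarrow> (\<forall>X\<in>F. \<forall>Y\<in>F. almost_subset X Y \<or> almost_subset Y X)"

lemma aschain_min:
  assumes "finite F" "F \<noteq> {}" "F \<subseteq> G" "aschain G"
  shows "\<exists>X\<in>F. almost_subset X (\<Inter>F)"
  using assms
proof (induct F rule: finite_ne_induct)
  case (singleton x) thus ?case by simp
next
  case (insert Y F)
  then obtain X where X: "X \<in> F" "almost_subset X (\<Inter>F)" by blast
  have "Y \<in> G" "X \<in> G" using insert X by auto
  hence "almost_subset X Y \<or> almost_subset Y X" using insert(6) unfolding aschain_def by blast
  thus ?case
  proof
    assume "almost_subset X Y"
    hence "almost_subset X (Y \<inter> \<Inter>F)" using X as_Int by blast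
    thus ?case using X by auto
  next
    assume "almost_subset Y X"
    hence "almost_subset Y (Y \<inter> \<Inter>F)" using X as_Int as_trans as_refl by blast
    thus ?case by auto
  qed
qed

lemma aschain_pseudo:
  assumes "countable F" "aschain F" "\<forall>X\<in>F. infinite X"
  shows "\<exists>V. infinite V \<and> (\<forall>X\<in>F. almost_subset V X)"
proof (cases "F = {}")
  case True thus ?thesis by (intro exI[of _ UNIV]) auto
next
  case False
  define Xs where "Xs = from_nat_into F"
  have XsF: "Xs i \<in> F" for i using False from_nat_into Xs_def by blast
  define I where "I = (\<lambda>k. \<Inter>i\<in>{..k}. Xs i)"
  have Iinf: "infinite (I k)" for k
  proof -
    have "finite (Xs ` {..k})" "Xs ` {..k} \<noteq> {}" "Xs ` {..k} \<subseteq> F" using XsF by auto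
    then obtain X where X: "X \<in> Xs ` {..k}" "almost_subset X (\<Inter>(Xs ` {..k}))"
      using aschain_min assms(2) by blast
    have "infinite X" using X(1) XsF assms(3) by blast
    thus ?thesis using X(2) as_infinite unfolding I_def by blast
  qed
  define nxt where "nxt = (\<lambda>k m. SOME v. v \<in> I k \<and> m < v)"
  have nxt: "nxt k m \<in> I k \<and> m < nxt k m" for k m
  proof -
    have "\<exists>v. v \<in> I k \<and> m < v" using Iinf[of k] unfolding infinite_nat_iff_unbounded by blast
    thus ?thesis unfolding nxt_def by (rule someI_ex)
  qed
  define v where "v = rec_nat (nxt 0 0) (\<lambda>k p. nxt (Suc k) p)"
  have v0: "v 0 = nxt 0 0" unfolding v_def by simp
  have vS: "v (Suc k) = nxt (Suc k) (v k)" for k unfolding v_def by simp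
  have vI: "v k \<in> I k" for k by (cases k) (auto simp: v0 vS nxt)
  have vmono: "v k < v (Suc k)" for k using vS nxt by simp
  hence sm: "strict_mono v" by (simp add: strict_mono_Suc_iff)
  show ?thesis
  proof (intro exI conjI ballI)
    show "infinite (range v)" using sm strict_mono_imp_inj_on range_inj_infinite by blast
  next
    fix X assume "X \<in> F"
    then obtain i where i: "Xs i = X" using from_nat_into_surj[OF assms(1)] Xs_def by blast
    have "range v - X \<subseteq> v ` {..<i}"
    proof
      fix y assume y: "y \<in> range v - X"
      then obtain k where k: "y = v k" by blast
      have "k < i"
      proof (rule ccontr)
        assume "\<not> k < i"
        hence "v k \<in> Xs i" using vI[of k] unfolding I_def by auto
        thus False using y k i by simp
      qed
      thus "y \<in> v ` {..<i}" using k by blast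
    qed
    thus "almost_subset (range v) X" unfolding almost_subset_def using finite_subset by blast
  qed
qed

definition decf :: "nat set \<Rightarrow> nat \<Rightarrow> nat" where "decf S n = (LEAST m. pt n m \<in> S)"

lemma decf_surj: "decf {pt n (f n) | n. True} = f"
proof
  fix n show "decf {pt n (f n) | n. True} n = f n"
    unfolding decf_def by (rule Least_equality) auto
qed

section \<open>P-point under CH\<close>

lemma ppoint_step:
  fixes F :: "nat set set" and D :: "nat set" and f :: "nat \<Rightarrow> nat"
  assumes "countable F" "aschain F" "\<forall>X\<in>F. infinite X"
  shows "\<exists>V. infinite V \<and> (\<forall>X\<in>F. almost_subset V X) \<and> (V \<subseteq> D \<or> V \<subseteq> - D) \<and>
     ((\<exists>c. \<forall>n\<in>V. f n = c) \<or> (\<forall>m. finite {n\<in>V. f n = m}))"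
proof -
  obtain V0 where V0: "infinite V0" "\<forall>X\<in>F. almost_subset V0 X" using aschain_pseudo[OF assms] by blast
  obtain V1 where V1: "infinite V1" "V1 \<subseteq> V0" "V1 \<subseteq> D \<or> V1 \<subseteq> - D"
  proof (cases "infinite (V0 \<inter> D)")
    case True thus ?thesis using that[of "V0 \<inter> D"] by blast
  next
    case False
    hence "infinite (V0 - D)" using V0(1) by (metis Diff_Diff_Int Diff_infinite_finite finite_Int inf_commute) 
    thus ?thesis using that[of "V0 - D"] by blast
  qed
  obtain V2 where V2: "infinite V2" "V2 \<subseteq> V1" "(\<exists>c. \<forall>n\<in>V2. f n = c) \<or> (\<forall>m. finite {n\<in>V2. f n = m})"
  proof (cases "\<exists>c. infinite {n\<in>V1. f n = c}")
    case True
    then obtain c where "infinite {n\<in>V1. f n = c}" by blast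
    thus ?thesis using that[of "{n\<in>V1. f n = c}"] by blast
  next
    case False thus ?thesis using that[of V1] V1 by blast
  qed
  show ?thesis
  proof (intro exI conjI)
    show "\<forall>X\<in>F. almost_subset V2 X" using V0 V1 V2 as_mono1 by (meson order_trans)
  qed (use V1 V2 in auto)
qed

definition ppgood :: "(nat set \<Rightarrow> nat set) \<Rightarrow> (nat set \<Rightarrow> nat set) \<Rightarrow> nat set \<Rightarrow> nat set \<Rightarrow> bool" where
  "ppgood e h a v \<longleftrightarrow> infinite v \<and> (\<forall>x\<in>underS omega1 a. almost_subset v (h x)) \<and>
     (v \<subseteq> e a \<or> v \<subseteq> - e a) \<and>
     ((\<exists>c. \<forall>n\<in>v. decf (e a) n = c) \<or> (\<forall>m. finite {n\<in>v. decf (e a) n = m}))"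

lemma ppoint_seq:
  "\<exists>h. \<forall>a\<in>Field omega1. ppgood e h a (h a)"
proof (rule o1_recursion)
  fix h h' :: "nat set \<Rightarrow> nat set" and a v
  assume "a \<in> Field omega1" "\<forall>x\<in>underS omega1 a. h x = h' x"
  hence "(\<forall>x\<in>underS omega1 a. almost_subset v (h x)) = (\<forall>x\<in>underS omega1 a. almost_subset v (h' x))"
    by simp
  thus "ppgood e h a v = ppgood e h' a v" unfolding ppgood_def by simp
next
  fix h :: "nat set \<Rightarrow> nat set" and a
  assume a: "a \<in> Field omega1" and H: "\<forall>x\<in>underS omega1 a. ppgood e h x (h x)"
  let ?F = "h ` underS omega1 a"
  have c1: "countable ?F" using o1_underS_countable[OF a] by blast
  have c2: "aschain ?F" unfolding aschain_def
  proof (intro ballI)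
    fix X Y assume "X \<in> ?F" "Y \<in> ?F"
    then obtain x y where xy: "x \<in> underS omega1 a" "y \<in> underS omega1 a" "X = h x" "Y = h y" by blast
    have "x \<in> Field omega1" "y \<in> Field omega1" using xy o1_underS_Field by auto
    hence "x = y \<or> x \<in> underS omega1 y \<or> y \<in> underS omega1 x" using o1_cases by blast
    moreover have "x \<in> underS omega1 y \<Longrightarrow> almost_subset Y X"
    proof -
      assume "x \<in> underS omega1 y"
      moreover have "ppgood e h y (h y)" using H xy by blast
      ultimately show ?thesis unfolding ppgood_def xy by blast
    qed
    moreover have "y \<in> underS omega1 x \<Longrightarrow> almost_subset X Y"
    proof -
      assume "y \<in> underS omega1 x"
      moreover have "ppgood e h x (h x)" using H xy by blast
      ultimately show ?thesis unfolding ppgood_def xy by blast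
    qed
    ultimately show "almost_subset X Y \<or> almost_subset Y X" using xy by auto
  qed
  have c3: "\<forall>X\<in>?F. infinite X"
  proof
    fix X assume "X \<in> ?F"
    then obtain x where "x \<in> underS omega1 a" "X = h x" by blast
    moreover hence "ppgood e h x (h x)" using H by blast
    ultimately show "infinite X" unfolding ppgood_def by blast
  qed
  obtain V where V: "infinite V" "\<forall>X\<in>?F. almost_subset V X" "V \<subseteq> e a \<or> V \<subseteq> - e a"
     "(\<exists>c. \<forall>n\<in>V. decf (e a) n = c) \<or> (\<forall>m. finite {n\<in>V. decf (e a) n = m})"
    using ppoint_step[OF c1 c2 c3, of "e a" "decf (e a)"] by blast
  have "\<forall>x\<in>underS omega1 a. almost_subset V (h x)" using V(2) by blast
  hence "ppgood e h a V" unfolding ppgood_def using V(1,3,4) by blast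
  thus "\<exists>v. ppgood e h a v" by blast
qed

lemma ppoint_exists: assumes "CH" shows "\<exists>U. P_point U"
proof -
  obtain e where e: "bij_betw e (Field omega1) (UNIV :: nat set set)" using CH_bij[OF assms] by blast
  obtain h where h: "\<forall>a\<in>Field omega1. ppgood e h a (h a)" using ppoint_seq by blast
  define U where "U = {D. \<exists>a\<in>Field omega1. almost_subset (h a) D}"
  have hinf: "a \<in> Field omega1 \<Longrightarrow> infinite (h a)" for a using h unfolding ppgood_def by blast
  have hdec: "a \<in> Field omega1 \<Longrightarrow> x \<in> underS omega1 a \<Longrightarrow> almost_subset (h a) (h x)" for a x
    using h unfolding ppgood_def by blast
  have esurj: "\<exists>a\<in>Field omega1. e a = D" for D using e unfolding bij_betw_def by (metis UNIV_I imageE)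
  have FieldNE: "Field omega1 \<noteq> {}" using o1_Field_uncountable by auto
  have inf: "\<forall>A\<in>U. infinite A" unfolding U_def using hinf as_infinite by blast
  have uf: "ultrafilter_on_nat U" unfolding ultrafilter_on_nat_def
  proof (intro conjI allI impI)
    show "{} \<notin> U" using inf by blast
    show "UNIV \<in> U" unfolding U_def using FieldNE by (auto simp: almost_subset_def)
  next
    fix A B assume "A \<in> U \<and> A \<subseteq> B" thus "B \<in> U" unfolding U_def using as_mono2 by blast
  next
    fix A B assume "A \<in> U \<and> B \<in> U"
    then obtain a b where ab: "a \<in> Field omega1" "b \<in> Field omega1" "almost_subset (h a) A" "almost_subset (h b) B"
      unfolding U_def by blast
    have "a = b \<or> a \<in> underS omega1 b \<or> b \<in> underS omega1 a" using o1_cases[OF ab(1,2)] .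
    thus "A \<inter> B \<in> U"
    proof (elim disjE)
      assume "a = b" thus ?thesis using ab as_Int unfolding U_def by blast
    next
      assume "a \<in> underS omega1 b"
      hence "almost_subset (h b) A" using hdec ab as_trans by blast
      thus ?thesis using ab as_Int unfolding U_def by blast
    next
      assume "b \<in> underS omega1 a"
      hence "almost_subset (h a) B" using hdec ab as_trans by blast
      thus ?thesis using ab as_Int unfolding U_def by blast
    qed
  next
    fix A
    obtain a where a: "a \<in> Field omega1" "e a = A" using esurj by blast
    hence "h a \<subseteq> A \<or> h a \<subseteq> - A" using h unfolding ppgood_def by blast
    thus "A \<in> U \<or> - A \<in> U" using a(1) as_subset unfolding U_def by blast
  qed
  have "P_point U" unfolding P_point_def free_ultrafilter_on_nat_def
  proof (intro conjI allI uf inf)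
    fix f :: "nat \<Rightarrow> nat"
    obtain a where a: "a \<in> Field omega1" "e a = {pt n (f n) | n. True}" using esurj by blast
    hence df: "decf (e a) = f" using decf_surj by simp
    have "h a \<in> U" unfolding U_def using a(1) as_refl by blast
    moreover have "(\<exists>c. \<forall>n\<in>h a. f n = c) \<or> (\<forall>m. finite {n\<in>h a. f n = m})"
      using h a(1) df unfolding ppgood_def by metis
    ultimately show "\<exists>A\<in>U. (\<exists>c. \<forall>n\<in>A. f n = c) \<or> (\<forall>m. finite {n\<in>A. f n = m})" by blast
  qed
  thus ?thesis by blast
qed


lemma split_inf:
  assumes "infinite (J :: 'a set)"
  shows "\<exists>J1 J2. J1 \<subseteq> J \<and> J2 \<subseteq> J \<and> J1 \<inter> J2 = {} \<and> infinite J1 \<and> infinite J2"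
proof -
  obtain f :: "nat \<Rightarrow> 'a" where f: "inj f" "range f \<subseteq> J" using infinite_countable_subset[OF assms] by blast
  let ?E = "range (\<lambda>n. f (2*n))" and ?O = "range (\<lambda>n. f (2*n+1))"
  have "inj (\<lambda>n. f (2*n))" unfolding inj_def
  proof (intro allI impI)
    fix x y :: nat assume "f (2*x) = f (2*y)"
    hence "2*x = 2*y" using f(1) unfolding inj_def by blast
    thus "x = y" by simp
  qed
  hence iE: "infinite ?E" using range_inj_infinite by blast
  have "inj (\<lambda>n. f (2*n+1))" unfolding inj_def
  proof (intro allI impI)
    fix x y :: nat assume "f (2*x+1) = f (2*y+1)"
    hence "2*x+1 = 2*y+1" using f(1) unfolding inj_def by blast
    thus "x = y" by simp
  qed
  hence iO: "infinite ?O" using range_inj_infinite by blast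
  have "?E \<inter> ?O = {}"
  proof (rule ccontr)
    assume "?E \<inter> ?O \<noteq> {}"
    then obtain a b where "f (2*a) = f (2*b+1)" by blast
    hence "2*a = 2*b+1" using f(1) unfolding inj_def by blast
    thus False by presburger
  qed
  moreover have "?E \<subseteq> J" using f(2) by auto
  moreover have "?O \<subseteq> J" using f(2) by auto
  ultimately show ?thesis using iE iO by (intro exI[of _ ?E] exI[of _ ?O]) simp
qed

lemma disj_family_notin:
  assumes u: "fu U" and J: "infinite J" and D: "\<forall>a\<in>J. \<forall>b\<in>J. a \<noteq> b \<longrightarrow> S a \<inter> S b = {}"
  shows "\<exists>J'\<subseteq>J. infinite J' \<and> (\<Union>a\<in>J'. S a) \<notin> U"
proof -
  obtain J1 J2 where J12: "J1 \<subseteq> J" "J2 \<subseteq> J" "J1 \<inter> J2 = {}" "infinite J1" "infinite J2"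
    using split_inf[OF J] by blast
  have "(\<Union>a\<in>J1. S a) \<inter> (\<Union>a\<in>J2. S a) = {}"
  proof (rule ccontr)
    assume "(\<Union>a\<in>J1. S a) \<inter> (\<Union>a\<in>J2. S a) \<noteq> {}"
    then obtain x a b where "a \<in> J1" "b \<in> J2" "x \<in> S a" "x \<in> S b" by blast
    moreover hence "a \<noteq> b" using J12(3) by blast
    moreover have "a \<in> J" "b \<in> J" using J12(1,2) \<open>a \<in> J1\<close> \<open>b \<in> J2\<close> by auto
    ultimately have "x \<in> S a \<inter> S b" "S a \<inter> S b = {}" using D by auto
    thus False by simp
  qed
  hence "(\<Union>a\<in>J1. S a) \<notin> U \<or> (\<Union>a\<in>J2. S a) \<notin> U" using fu_disj[OF u] by blast
  thus ?thesis using J12 by blast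
qed

lemma greedy:
  fixes S :: "'a \<Rightarrow> nat set"
  assumes fin: "\<forall>n\<in>I. finite (S n) \<and> S n \<noteq> {}"
  shows "(\<exists>J\<subseteq>I. infinite J \<and> (\<forall>a\<in>J. \<forall>b\<in>J. a \<noteq> b \<longrightarrow> S a \<inter> S b = {})) \<or>
         (\<exists>H. finite H \<and> (\<forall>n\<in>I. S n \<inter> H \<noteq> {}))"
proof (rule ccontr)
  assume "\<not> ?thesis"
  hence noH: "\<forall>H. finite H \<longrightarrow> (\<exists>n\<in>I. S n \<inter> H = {})"
    and noJ: "\<not> (\<exists>J\<subseteq>I. infinite J \<and> (\<forall>a\<in>J. \<forall>b\<in>J. a \<noteq> b \<longrightarrow> S a \<inter> S b = {}))" by blast+
  define pick where "pick = (\<lambda>H. SOME n. n \<in> I \<and> S n \<inter> H = {})"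
  have pick: "finite H \<Longrightarrow> pick H \<in> I \<and> S (pick H) \<inter> H = {}" for H
  proof -
    assume "finite H"
    hence "\<exists>n. n \<in> I \<and> S n \<inter> H = {}" using noH by blast
    thus ?thesis unfolding pick_def by (rule someI_ex)
  qed
  define sq where "sq = rec_nat (pick {}, S (pick {})) (\<lambda>k p. (pick (snd p), snd p \<union> S (pick (snd p))))"
  have sq0: "sq 0 = (pick {}, S (pick {}))" unfolding sq_def by simp
  have sqS: "sq (Suc k) = (pick (snd (sq k)), snd (sq k) \<union> S (pick (snd (sq k))))" for k
    unfolding sq_def by simp
  define nn where "nn = (\<lambda>k. fst (sq k))"
  have snd_eq: "snd (sq k) = (\<Union>i\<le>k. S (nn i))" for k
  proof (induct k)
    case 0 thus ?case using sq0 nn_def by simp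
  next
    case (Suc k) thus ?case using sqS[of k] nn_def by (simp add: atMost_Suc Un_commute)
  qed
  have inv: "nn k \<in> I \<and> finite (snd (sq k))" for k
  proof (induct k)
    case 0 thus ?case using pick[of "{}"] sq0 nn_def fin by simp
  next
    case (Suc k)
    hence f: "finite (snd (sq k))" by blast
    have "nn (Suc k) = pick (snd (sq k))" using sqS nn_def by simp
    hence "nn (Suc k) \<in> I" using pick[OF f] by simp
    moreover have "snd (sq (Suc k)) = snd (sq k) \<union> S (nn (Suc k))" using sqS nn_def by simp
    ultimately show ?case using f fin by simp
  qed
  have disj: "i < k \<Longrightarrow> S (nn k) \<inter> S (nn i) = {}" for i k
  proof -
    assume ik: "i < k"
    then obtain k' where k': "k = Suc k'" "i \<le> k'" by (metis less_Suc_eq_le less_imp_Suc_add)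
    have "nn k = pick (snd (sq k'))" using sqS nn_def k' by simp
    hence "S (nn k) \<inter> snd (sq k') = {}" using pick inv by simp
    moreover have "S (nn i) \<subseteq> snd (sq k')" using snd_eq k'(2) by auto
    ultimately show ?thesis by blast
  qed
  have "inj nn"
  proof (rule injI)
    fix i k assume e: "nn i = nn k"
    show "i = k"
    proof (rule ccontr)
      assume "i \<noteq> k"
      hence "i < k \<or> k < i" by arith
      hence "S (nn k) \<inter> S (nn i) = {}" using disj by (metis inf_commute)
      thus False using e fin inv by auto
    qed
  qed
  hence "infinite (range nn)" using range_inj_infinite by blast
  moreover have "range nn \<subseteq> I" using inv by blast
  moreover have "\<forall>a\<in>range nn. \<forall>b\<in>range nn. a \<noteq> b \<longrightarrow> S a \<inter> S b = {}"
  proof (intro ballI impI)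
    fix a b assume "a \<in> range nn" "b \<in> range nn" "a \<noteq> b"
    then obtain i k where ik: "a = nn i" "b = nn k" "i \<noteq> k" by blast
    hence "i < k \<or> k < i" by arith
    thus "S a \<inter> S b = {}" using disj ik by (metis inf_commute)
  qed
  ultimately show False using noJ by blast
qed

lemma dichotomy:
  fixes U :: "nat set set" and K :: "nat \<Rightarrow> nat \<Rightarrow> nat set" and M XA :: "nat set"
  assumes pp: "P_point U" and XA: "XA \<notin> U"
    and dec: "\<And>j n. K (Suc j) n \<subseteq> K j n"
    and ge: "\<And>j n. K j n \<subseteq> {j..}"
    and ne: "\<And>j. finite {n\<in>M. K j n = {}}"
  shows "(\<exists>X. X \<notin> U \<and> (\<forall>j. finite {n\<in>M. K j n \<inter> X = {}})) \<or>
         (\<exists>j J. J \<subseteq> M \<and> infinite J \<and> (\<Union>n\<in>J. K j n) \<notin> U \<and> (\<forall>n\<in>J. K j n \<inter> XA = {}))"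
proof (rule disjCI)
  assume nK: "\<not> (\<exists>j J. J \<subseteq> M \<and> infinite J \<and> (\<Union>n\<in>J. K j n) \<notin> U \<and> (\<forall>n\<in>J. K j n \<inter> XA = {}))"
  have u: "fu U" using pp pp_fu by blast
  have decm: "j \<le> j' \<Longrightarrow> K j' n \<subseteq> K j n" for j j' n
  proof (induct j' rule: dec_induct)
    case base thus ?case by simp
  next
    case (step i) thus ?case using dec[of i n] by blast
  qed
  define Ys where "Ys = (\<lambda>i. case prod_decode i of (j, n) \<Rightarrow> (if K j n \<in> U then K j n else - K j n))"
  have YsU: "Ys i \<in> U" for i
    unfolding Ys_def using fu_compl[OF u] by (auto split: prod.split)
  obtain Y where Y: "Y \<in> U" "\<forall>i. finite (Y - Ys i)" using pp_pseudo[of U Ys, OF pp YsU] by blast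
  have YU: "K j n \<in> U \<Longrightarrow> finite (Y - K j n)" for j n
    using Y(2)[rule_format, of "prod_encode (j,n)"] unfolding Ys_def by simp
  have YN: "K j n \<notin> U \<Longrightarrow> finite (Y \<inter> K j n)" for j n
  proof -
    assume "K j n \<notin> U"
    hence "finite (Y - - K j n)" using Y(2)[rule_format, of "prod_encode (j,n)"] unfolding Ys_def by simp
    thus ?thesis by (simp add: Diff_Compl)
  qed
  obtain Yh where Yh: "Yh \<subseteq> Y" "infinite Yh" "Yh \<notin> U" using fu_split[OF u fu_inf[OF u Y(1)]] by blast
  have nY: "- Y \<notin> U" using Y(1) fu_compl[OF u] by simp
  define F where "F = (\<lambda>j. {n\<in>M. K j n \<inter> XA = {} \<and> K j n \<notin> U \<and> K j n \<subseteq> Y \<and> K j n \<noteq> {}})"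
  have Hex: "\<exists>H. finite H \<and> (\<forall>n\<in>F j. K j n \<inter> H \<noteq> {})" for j
  proof -
    have fin: "\<forall>n\<in>F j. finite (K j n) \<and> K j n \<noteq> {}"
    proof
      fix n assume n: "n \<in> F j"
      hence "K j n = Y \<inter> K j n" unfolding F_def by blast
      thus "finite (K j n) \<and> K j n \<noteq> {}" using YN[of j n] n unfolding F_def by simp
    qed
    have "\<not> (\<exists>J\<subseteq>F j. infinite J \<and> (\<forall>a\<in>J. \<forall>b\<in>J. a \<noteq> b \<longrightarrow> K j a \<inter> K j b = {}))"
    proof
      assume "\<exists>J\<subseteq>F j. infinite J \<and> (\<forall>a\<in>J. \<forall>b\<in>J. a \<noteq> b \<longrightarrow> K j a \<inter> K j b = {})"
      then obtain J where J: "J \<subseteq> F j" "infinite J" "\<forall>a\<in>J. \<forall>b\<in>J. a \<noteq> b \<longrightarrow> K j a \<inter> K j b = {}" by blast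
      obtain J' where J': "J' \<subseteq> J" "infinite J'" "(\<Union>a\<in>J'. K j a) \<notin> U"
        using disj_family_notin[OF u J(2) J(3)] by blast
      have "J' \<subseteq> M" "\<forall>n\<in>J'. K j n \<inter> XA = {}" using J'(1) J(1) unfolding F_def by auto
      thus False using nK J' by blast
    qed
    thus ?thesis using greedy[OF fin] by blast
  qed
  define Hs where "Hs = (\<lambda>j. SOME H. finite H \<and> (\<forall>n\<in>F j. K j n \<inter> H \<noteq> {}))"
  have Hs: "finite (Hs j) \<and> (\<forall>n\<in>F j. K j n \<inter> Hs j \<noteq> {})" for j
    unfolding Hs_def using Hex[of j] by (rule someI_ex)
  define H' where "H' = (\<lambda>j. Hs j \<inter> {j..})"
  have H'hit: "n \<in> F j \<Longrightarrow> K j n \<inter> H' j \<noteq> {}" for n j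
  proof -
    assume "n \<in> F j"
    hence "K j n \<inter> Hs j \<noteq> {}" using Hs by blast
    thus ?thesis using ge[of j n] unfolding H'_def by blast
  qed
  have H'fin: "finite (H' j)" for j using Hs unfolding H'_def by blast
  define js where "js = rec_nat 0 (\<lambda>i p. Suc (Max (insert p (H' p))))"
  have js0: "js 0 = 0" unfolding js_def by simp
  have jsS: "js (Suc i) = Suc (Max (insert (js i) (H' (js i))))" for i unfolding js_def by simp
  have jsle: "js i < js (Suc i)" for i
  proof -
    have "js i \<le> Max (insert (js i) (H' (js i)))" using H'fin by simp
    thus ?thesis using jsS by simp
  qed
  have jsmono: "strict_mono js" using jsle by (simp add: strict_mono_Suc_iff)
  have jsge: "i \<le> js i" for i using jsmono by (simp add: strict_mono_imp_increasing)
  have Hin: "H' (js i) \<subseteq> {js i..<js (Suc i)}" for i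
  proof
    fix x assume x: "x \<in> H' (js i)"
    hence "x \<le> Max (insert (js i) (H' (js i)))" using H'fin by simp
    moreover have "js i \<le> x" using x unfolding H'_def by simp
    ultimately show "x \<in> {js i..<js (Suc i)}" using jsS by simp
  qed
  have Hdisj: "i < i' \<Longrightarrow> H' (js i) \<inter> H' (js i') = {}" for i i'
  proof -
    assume "i < i'"
    hence "Suc i \<le> i'" by simp
    hence "js (Suc i) \<le> js i'" using jsmono by (simp add: strict_mono_less_eq)
    moreover have "H' (js i) \<subseteq> {..<js (Suc i)}" using Hin[of i] by auto
    moreover have "H' (js i') \<subseteq> {js i'..}" using Hin[of i'] by auto
    ultimately show ?thesis by fastforce
  qed
  define Xe where "Xe = (\<Union>i\<in>{i. even i}. H' (js i))"
  define Xo where "Xo = (\<Union>i\<in>{i. odd i}. H' (js i))"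
  have "Xe \<inter> Xo = {}"
  proof (rule ccontr)
    assume "Xe \<inter> Xo \<noteq> {}"
    then obtain x i i' where ii: "even i" "odd i'" "x \<in> H' (js i)" "x \<in> H' (js i')"
      unfolding Xe_def Xo_def by blast
    have "i < i' \<or> i' < i" using ii by (metis linorder_neqE_nat)
    thus False using Hdisj ii by blast
  qed
  hence "Xe \<notin> U \<or> Xo \<notin> U" using fu_disj[OF u] by blast
  then obtain P where P: "\<forall>j. \<exists>i\<in>P. j \<le> i" "(\<Union>i\<in>P. H' (js i)) \<notin> U"
  proof
    assume "Xe \<notin> U"
    moreover have "\<And>j::nat. \<exists>i\<in>{i. even i}. j \<le> i" by (rule_tac x="2*j" in bexI) auto
    ultimately show ?thesis using that unfolding Xe_def by blast
  next
    assume "Xo \<notin> U"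
    moreover have "\<And>j::nat. \<exists>i\<in>{i. odd i}. j \<le> i" by (rule_tac x="2*j+1" in bexI) auto
    ultimately show ?thesis using that unfolding Xo_def by blast
  qed
  define Xh where "Xh = (\<Union>i\<in>P. H' (js i))"
  define X where "X = XA \<union> - Y \<union> Yh \<union> Xh"
  have XnU: "X \<notin> U" unfolding X_def
    by (intro fu_Un[OF u]) (use XA nY Yh(3) P(2) Xh_def in auto)
  have "\<forall>j. finite {n\<in>M. K j n \<inter> X = {}}"
  proof
    fix j
    obtain i where i: "i \<in> P" "j \<le> i" using P(1) by blast
    define j' where "j' = js i"
    have jj: "j \<le> j'" using i(2) jsge[of i] unfolding j'_def by simp
    have "{n\<in>M. K j n \<inter> X = {}} \<subseteq> {n\<in>M. K j' n = {}}"
    proof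
      fix n assume n: "n \<in> {n\<in>M. K j n \<inter> X = {}}"
      have sub: "K j' n \<subseteq> K j n" using decm[OF jj] .
      have "K j' n \<inter> X = {}" using n sub by blast
      show "n \<in> {n\<in>M. K j' n = {}}"
      proof (rule ccontr)
        assume ne': "n \<notin> {n\<in>M. K j' n = {}}"
        hence kne: "K j' n \<noteq> {}" using n by blast
        have d: "K j' n \<inter> X = {}" using n sub by blast
        hence xa: "K j' n \<inter> XA = {}" and ky: "K j' n \<subseteq> Y" and kyh: "K j' n \<inter> Yh = {}"
          and kxh: "K j' n \<inter> Xh = {}" unfolding X_def by blast+
        show False
        proof (cases "K j' n \<in> U")
          case True
          hence "finite (Y - K j' n)" using YU by blast
          moreover have "Yh \<subseteq> Y - K j' n" using Yh(1) kyh by blast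
          ultimately show False using Yh(2) finite_subset by blast
        next
          case False
          hence "n \<in> F j'" unfolding F_def using n xa ky kne by blast
          hence "K j' n \<inter> H' j' \<noteq> {}" using H'hit by blast
          moreover have "H' j' \<subseteq> Xh" unfolding Xh_def j'_def using i(1) by blast
          ultimately show False using kxh by blast
        qed
      qed
    qed
    thus "finite {n\<in>M. K j n \<inter> X = {}}" using ne[of j'] finite_subset by blast
  qed
  thus "\<exists>X. X \<notin> U \<and> (\<forall>j. finite {n\<in>M. K j n \<inter> X = {}})" using XnU by blast
qed


definition Bbase :: "nat set" where "Bbase = {x. rowof x \<le> col x}"
definition Abase :: "nat set \<Rightarrow> nat set" where "Abase Q = {pt n 0 | n. n \<in> Q}"

lemma Bbase_col: "Bbase \<inter> colset n = pt n ` {..n}"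
proof
  show "Bbase \<inter> colset n \<subseteq> pt n ` {..n}"
  proof
    fix x assume x: "x \<in> Bbase \<inter> colset n"
    hence "col x = n" "rowof x \<le> n" unfolding Bbase_def by auto
    hence "x = pt n (rowof x)" "rowof x \<le> n" using pt_colrow[of x] by auto
    thus "x \<in> pt n ` {..n}" by blast
  qed
  show "pt n ` {..n} \<subseteq> Bbase \<inter> colset n" unfolding Bbase_def by auto
qed

lemma colfin_Bbase: "colfin Bbase" unfolding colfin_def Bbase_col by simp

lemma csz_Bbase: "csz Bbase n = Suc n"
proof -
  have "inj_on (pt n) {..n}" unfolding inj_on_def by simp
  thus ?thesis unfolding csz_def Bbase_col by (simp add: card_image)
qed

lemma bigU_Bbase: "fu U \<Longrightarrow> bigU U Bbase"
  unfolding bigU_def csz_Bbase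
proof
  fix m assume u: "fu U"
  have "- {n. m \<le> Suc n} \<subseteq> {..m}" by auto
  hence "finite (- {n. m \<le> Suc n})" using finite_subset by blast
  thus "{n. m \<le> Suc n} \<in> U" using fu_cofin[OF u] by blast
qed

lemma Abase_sub: "Abase Q \<subseteq> Bbase" unfolding Abase_def Bbase_def by auto
lemma col_Abase: "col ` Abase Q = Q" unfolding Abase_def by force
lemma Abase_inf: "infinite Q \<Longrightarrow> infinite (Abase Q)"
  using col_Abase by (metis finite_imageI)

section \<open>Interpolation\<close>

lemma interp:
  fixes a b :: "nat \<Rightarrow> nat set"
  assumes pp: "P_point U" and ab: "\<And>i k. almost_subset (a i) (b k)"
    and aU: "\<And>i. col ` (a i) \<notin> U" and b0: "colfin (b 0)"
  shows "\<exists>C. (\<forall>i. almost_subset (a i) C) \<and> (\<forall>k. almost_subset C (b k)) \<and> col ` C \<notin> U \<and> C \<subseteq> b 0"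
proof -
  have u: "fu U" using pp pp_fu by blast
  define Ys where "Ys = (\<lambda>i. - (col ` (a i)))"
  have YsU: "Ys i \<in> U" for i using aU fu_compl[OF u] unfolding Ys_def by blast
  obtain Y where Y: "Y \<in> U" "\<forall>i. finite (Y - Ys i)" using pp_pseudo[of U Ys, OF pp YsU] by blast
  have Yfin: "finite (Y \<inter> col ` (a i))" for i using Y(2)[rule_format, of i] unfolding Ys_def by (simp add: Diff_Compl)
  have acf: "colfin (a i)" for i using colfin_almost[OF b0 ab[of i 0]] .
  define C where "C = (\<Union>i. (a i \<inter> (\<Inter>k\<in>{..i}. b k)) - {x. col x \<in> Y})"
  have "\<forall>i. almost_subset (a i) C"
  proof
    fix i
    have "a i - C \<subseteq> (\<Union>k\<in>{..i}. a i - b k) \<union> (\<Union>n\<in>Y \<inter> col ` (a i). a i \<inter> colset n)"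
      unfolding C_def by auto
    moreover have "finite (\<Union>k\<in>{..i}. a i - b k)" using ab unfolding almost_subset_def by blast
    moreover have "finite (\<Union>n\<in>Y \<inter> col ` (a i). a i \<inter> colset n)" using Yfin acf unfolding colfin_def by blast
    ultimately show "almost_subset (a i) C" unfolding almost_subset_def by (meson finite_UnI finite_subset)
  qed
  moreover have "\<forall>k. almost_subset C (b k)"
  proof
    fix k
    have "C - b k \<subseteq> (\<Union>i\<in>{..<k}. a i - b k)"
    proof
      fix x assume x: "x \<in> C - b k"
      then obtain i where i: "x \<in> a i" "\<forall>k'\<le>i. x \<in> b k'" unfolding C_def by auto
      have "i < k"
      proof (rule ccontr)
        assume "\<not> i < k" hence "k \<le> i" by simp
        thus False using i x by blast
      qed
      thus "x \<in> (\<Union>i\<in>{..<k}. a i - b k)" using i x by blast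
    qed
    moreover have "finite (\<Union>i\<in>{..<k}. a i - b k)" using ab unfolding almost_subset_def by blast
    ultimately show "almost_subset C (b k)" unfolding almost_subset_def using finite_subset by blast
  qed
  moreover have "col ` C \<subseteq> - Y" unfolding C_def by auto
  hence "col ` C \<notin> U" using Y(1) fu_compl[OF u] fu_sub_notin[OF u] by (metis double_compl)
  moreover have "C \<subseteq> b 0" unfolding C_def by auto
  ultimately show ?thesis by blast
qed

section \<open>Pseudo-intersection keeping big columns\<close>

lemma pseudoG:
  fixes b :: "nat \<Rightarrow> nat set"
  assumes pp: "P_point U" and ch: "aschain (range b)" and bc: "\<And>k. colfin (b k)" and bU: "\<And>k. bigU U (b k)"
  shows "\<exists>G. (\<forall>k. almost_subset G (b k)) \<and> bigU U G \<and> G \<subseteq> b 0"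
proof -
  have u: "fu U" using pp pp_fu by blast
  define Ib where "Ib = (\<lambda>i. \<Inter>k\<in>{..i}. b k)"
  have Ibc: "colfin (Ib i)" for i
  proof -
    have "Ib i \<subseteq> b 0" unfolding Ib_def by blast
    thus ?thesis using colfin_subset[OF bc[of 0]] by blast
  qed
  define T where "T = (\<lambda>i. {n. i \<le> csz (Ib i) n})"
  have TU: "T i \<in> U" for i
  proof -
    have f1: "finite (b ` {..i})" and f2: "b ` {..i} \<noteq> {}" and f3: "b ` {..i} \<subseteq> range b" by auto
    obtain X where X: "X \<in> b ` {..i}" "almost_subset X (\<Inter>(b ` {..i}))" using aschain_min[OF f1 f2 f3 ch] by blast
    have Xc: "colfin X" "bigU U X" using X(1) bc bU by auto
    define Kf where "Kf = X - Ib i"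
    have Kf: "finite Kf" using X(2) unfolding Kf_def Ib_def almost_subset_def by simp
    have "bigU U (X - Kf)" using bigU_diff_fin[OF u Xc Kf] .
    moreover have "X - Kf \<subseteq> Ib i" unfolding Kf_def by auto
    ultimately have "bigU U (Ib i)" using bigU_mono[OF u Ibc] by blast
    thus ?thesis unfolding T_def bigU_def by blast
  qed
  obtain Tt where Tt: "Tt \<in> U" "\<forall>i. finite (Tt - T i)" using pp_pseudo[of U T, OF pp TU] by blast
  define qual where "qual = (\<lambda>n i. i \<le> n \<and> (\<forall>k\<le>i. n \<in> T k))"
  define G where "G = {x. col x \<in> Tt \<and> col x \<in> T 0 \<and> (\<forall>i. qual (col x) i \<longrightarrow> x \<in> b i)}"
  have G0: "G \<subseteq> b 0"
  proof
    fix x assume x: "x \<in> G"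
    hence "col x \<in> T 0" "\<forall>i. qual (col x) i \<longrightarrow> x \<in> b i" unfolding G_def by blast+
    moreover have "qual (col x) 0" using \<open>col x \<in> T 0\<close> unfolding qual_def by simp
    ultimately show "x \<in> b 0" by blast
  qed
  have Gc: "colfin G" using colfin_subset[OF bc[of 0] G0] .
  have "\<forall>k. almost_subset G (b k)"
  proof
    fix k
    define Cs where "Cs = {..<k} \<union> (\<Union>k'\<in>{..k}. Tt - T k')"
    have Csf: "finite Cs" unfolding Cs_def using Tt(2) by blast
    have "G - b k \<subseteq> (\<Union>n\<in>Cs. b 0 \<inter> colset n)"
    proof
      fix x assume x: "x \<in> G - b k"
      hence nq: "\<not> qual (col x) k" unfolding G_def by blast
      have cT: "col x \<in> Tt" using x unfolding G_def by blast
      have "col x \<in> Cs"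
      proof (cases "col x < k")
        case True thus ?thesis unfolding Cs_def by simp
      next
        case False
        then obtain k' where "k' \<le> k" "col x \<notin> T k'" using nq unfolding qual_def by auto
        thus ?thesis using cT unfolding Cs_def by blast
      qed
      thus "x \<in> (\<Union>n\<in>Cs. b 0 \<inter> colset n)" using x G0 by auto
    qed
    moreover have "finite (\<Union>n\<in>Cs. b 0 \<inter> colset n)" using Csf bc[of 0] unfolding colfin_def by blast
    ultimately show "almost_subset G (b k)" unfolding almost_subset_def using finite_subset by blast
  qed
  moreover have "bigU U G" unfolding bigU_def
  proof
    fix m
    define S where "S = (Tt \<inter> T 0) - {..<m} - (\<Union>k'\<in>{..m}. Tt - T k')"
    have "finite ({..<m} \<union> (\<Union>k'\<in>{..m}. Tt - T k'))" using Tt(2) by blast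
    moreover have "Tt \<inter> T 0 \<in> U" using Tt(1) TU fu_Int[OF u] by blast
    ultimately have "(Tt \<inter> T 0) - ({..<m} \<union> (\<Union>k'\<in>{..m}. Tt - T k')) \<in> U" using fu_diff_fin[OF u] by blast
    moreover have "(Tt \<inter> T 0) - ({..<m} \<union> (\<Union>k'\<in>{..m}. Tt - T k')) = S" unfolding S_def by blast
    ultimately have SU: "S \<in> U" by simp
    have "S \<subseteq> {n. m \<le> csz G n}"
    proof
      fix n assume n: "n \<in> S"
      have qm: "qual n m" using n unfolding S_def qual_def by auto
      define Q where "Q = {i. qual n i}"
      have Qf: "finite Q" unfolding Q_def qual_def by (rule finite_subset[of _ "{..n}"]) auto
      have mQ: "m \<in> Q" using qm Q_def by simp
      define j where "j = Max Q"
      have jQ: "j \<in> Q" using Qf mQ unfolding j_def by (metis Max_in empty_iff)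
      have mj: "m \<le> j" using Qf mQ unfolding j_def by simp
      have "Ib j \<inter> colset n \<subseteq> G \<inter> colset n"
      proof
        fix x assume x: "x \<in> Ib j \<inter> colset n"
        have "col x \<in> Tt" "col x \<in> T 0" using x n unfolding S_def by auto
        moreover have "\<forall>i. qual (col x) i \<longrightarrow> x \<in> b i"
        proof (intro allI impI)
          fix i assume "qual (col x) i"
          hence "i \<in> Q" using x Q_def by simp
          hence "i \<le> j" using Qf unfolding j_def by simp
          thus "x \<in> b i" using x unfolding Ib_def by auto
        qed
        ultimately show "x \<in> G \<inter> colset n" using x unfolding G_def by blast
      qed
      moreover have "finite (G \<inter> colset n)" using Gc unfolding colfin_def by blast
      ultimately have "csz (Ib j) n \<le> csz G n" unfolding csz_def by (rule card_mono[rotated])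
      moreover have "j \<le> csz (Ib j) n" using jQ unfolding Q_def qual_def T_def by simp
      ultimately show "n \<in> {n. m \<le> csz G n}" using mj by simp
    qed
    thus "{n. m \<le> csz G n} \<in> U" using SU fu_mono[OF u] by blast
  qed
  ultimately show ?thesis using G0 by blast
qed

section \<open>Handling a candidate lsc map\<close>

definition psigood :: "nat set set \<Rightarrow> (nat set \<Rightarrow> nat set) \<Rightarrow> (nat \<Rightarrow> nat set) \<Rightarrow> nat set \<Rightarrow> bool" where
  "psigood P B psi M \<longleftrightarrow> (\<forall>n\<in>M. psi n \<noteq> {}) \<and>
     (\<forall>F. finite F \<and> F \<noteq> {} \<and> F \<subseteq> P \<longrightarrow> finite {n\<in>M. psi n \<inter> \<Inter>(B ` F) = {}}) \<and>
     (\<forall>k. \<exists>x\<in>P. B x \<inter> colset k = {})"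

definition SelK :: "(nat \<Rightarrow> nat set) \<Rightarrow> nat set \<Rightarrow> nat set \<Rightarrow> bool" where
  "SelK psi M A' \<longleftrightarrow> (\<exists>sel. (\<forall>n\<in>M. sel n \<in> psi n) \<and> (\<forall>x. finite {n\<in>M. sel n = x}) \<and> sel ` M \<subseteq> A')"

definition KillK :: "nat set set \<Rightarrow> (nat set \<Rightarrow> nat set) \<Rightarrow> (nat \<Rightarrow> nat set) \<Rightarrow> nat set \<Rightarrow> nat set \<Rightarrow> bool" where
  "KillK P B psi M B' \<longleftrightarrow> (\<exists>F J. finite F \<and> F \<subseteq> P \<and> J \<subseteq> M \<and> infinite J \<and> (\<forall>n\<in>J. psi n \<inter> B' \<inter> \<Inter>(B ` F) = {}))"

lemma psi_step:
  fixes P :: "nat set set" and B :: "nat set \<Rightarrow> nat set"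
  assumes pp: "P_point U" and Pc: "countable P" and BP: "\<forall>x\<in>P. B x \<subseteq> Bbase"
    and AB1: "A1 \<subseteq> B1" "col ` A1 \<notin> U" "bigU U B1" "colfin B1"
    and good: "psigood P B psi M"
  shows "\<exists>A2 B2. A1 \<subseteq> A2 \<and> A2 \<subseteq> B2 \<and> B2 \<subseteq> B1 \<union> A2 \<and> col ` A2 \<notin> U \<and> bigU U B2 \<and> colfin B2 \<and>
     (\<forall>x\<in>P. almost_subset (A2 - A1) (B x)) \<and> almost_subset (A2 - A1) Bbase \<and>
     (SelK psi M A2 \<or> KillK P B psi M B2)"
proof -
  have u: "fu U" using pp pp_fu by blast
  have g1: "\<forall>n\<in>M. psi n \<noteq> {}" and g2: "\<And>F. finite F \<Longrightarrow> F \<noteq> {} \<Longrightarrow> F \<subseteq> P \<Longrightarrow> finite {n\<in>M. psi n \<inter> \<Inter>(B ` F) = {}}"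
    and g3: "\<forall>k. \<exists>x\<in>P. B x \<inter> colset k = {}" using good unfolding psigood_def by blast+
  have Pne: "P \<noteq> {}" using g3 by blast
  define ee where "ee = from_nat_into P"
  have eeP: "ee i \<in> P" for i using from_nat_into[OF Pne] ee_def by simp
  have eesurj: "x \<in> P \<Longrightarrow> \<exists>i. ee i = x" for x using from_nat_into_surj[OF Pc] ee_def by blast
  define rr where "rr = (\<lambda>k. SOME x. x \<in> P \<and> B x \<inter> colset k = {})"
  have rr: "rr k \<in> P \<and> B (rr k) \<inter> colset k = {}" for k
  proof -
    have "\<exists>x. x \<in> P \<and> B x \<inter> colset k = {}" using g3 by blast
    thus ?thesis unfolding rr_def by (rule someI_ex)
  qed
  define Fs where "Fs = (\<lambda>j. ee ` {..j} \<union> rr ` {..<j})"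
  have Fsf: "finite (Fs j)" "Fs j \<noteq> {}" "Fs j \<subseteq> P" for j unfolding Fs_def using eeP rr by auto
  define W where "W = (\<lambda>j. \<Inter>(B ` Fs j))"
  have WB: "W j \<subseteq> Bbase" for j
  proof -
    have "ee 0 \<in> Fs j" unfolding Fs_def by simp
    hence "W j \<subseteq> B (ee 0)" unfolding W_def by blast
    thus ?thesis using BP eeP by blast
  qed
  have Wanti: "j \<le> j' \<Longrightarrow> W j' \<subseteq> W j" for j j'
  proof -
    assume "j \<le> j'"
    hence "Fs j \<subseteq> Fs j'" unfolding Fs_def by auto
    thus ?thesis unfolding W_def by blast
  qed
  have Wcol: "k < j \<Longrightarrow> W j \<inter> colset k = {}" for k j
  proof -
    assume "k < j"
    hence "rr k \<in> Fs j" unfolding Fs_def by simp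
    hence "W j \<subseteq> B (rr k)" unfolding W_def by blast
    thus ?thesis using rr by blast
  qed
  have Wge: "x \<in> W j \<Longrightarrow> j \<le> col x" for x j
  proof (rule ccontr)
    assume "x \<in> W j" "\<not> j \<le> col x"
    thus False using Wcol[of "col x" j] by auto
  qed
  have WeeB: "W i \<subseteq> B (ee i)" for i unfolding W_def Fs_def by blast
  define K where "K = (\<lambda>j n. col ` (psi n \<inter> W j))"
  have Kdec: "K (Suc j) n \<subseteq> K j n" for j n unfolding K_def using Wanti[of j "Suc j"] by auto
  have Kge: "K j n \<subseteq> {j..}" for j n unfolding K_def using Wge by auto
  have Kne: "finite {n\<in>M. K j n = {}}" for j
  proof -
    have "{n\<in>M. K j n = {}} = {n\<in>M. psi n \<inter> \<Inter>(B ` Fs j) = {}}" unfolding K_def W_def by auto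
    thus ?thesis using g2[OF Fsf(1) Fsf(2) Fsf(3)] by simp
  qed
  have dich: "(\<exists>X. X \<notin> U \<and> (\<forall>j. finite {n\<in>M. K j n \<inter> X = {}})) \<or>
         (\<exists>j J. J \<subseteq> M \<and> infinite J \<and> (\<Union>n\<in>J. K j n) \<notin> U \<and> (\<forall>n\<in>J. K j n \<inter> col ` A1 = {}))"
    by (rule dichotomy[OF pp AB1(2) Kdec Kge Kne])
  thus ?thesis
  proof
    assume "\<exists>j J. J \<subseteq> M \<and> infinite J \<and> (\<Union>n\<in>J. K j n) \<notin> U \<and> (\<forall>n\<in>J. K j n \<inter> col ` A1 = {})"
    then obtain j J where J: "J \<subseteq> M" "infinite J" "(\<Union>n\<in>J. K j n) \<notin> U" "\<forall>n\<in>J. K j n \<inter> col ` A1 = {}" by blast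
    define R where "R = (\<Union>n\<in>J. psi n \<inter> W j)"
    have colR: "col ` R = (\<Union>n\<in>J. K j n)" unfolding R_def K_def by blast
    have A1R: "A1 \<inter> R = {}"
    proof (rule ccontr)
      assume "A1 \<inter> R \<noteq> {}"
      then obtain x n where "x \<in> A1" "n \<in> J" "x \<in> psi n \<inter> W j" unfolding R_def by blast
      hence "col x \<in> K j n \<inter> col ` A1" unfolding K_def by blast
      thus False using J(4) \<open>n \<in> J\<close> by blast
    qed
    have "A1 \<subseteq> B1 - R" using AB1(1) A1R by blast
    moreover have "bigU U (B1 - R)" using bigU_diff_cols[OF u AB1(3)] colR J(3) by simp
    moreover have "colfin (B1 - R)" using colfin_subset[OF AB1(4)] by blast
    moreover have "KillK P B psi M (B1 - R)" unfolding KillK_def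
    proof (intro exI conjI)
      show "\<forall>n\<in>J. psi n \<inter> (B1 - R) \<inter> \<Inter>(B ` Fs j) = {}" unfolding R_def W_def by blast
    qed (use Fsf J in auto)
    ultimately show ?thesis using AB1(2) by (rule_tac exI[of _ A1], rule_tac exI[of _ "B1 - R"]) (auto simp: almost_subset_def)
  next
    assume "\<exists>X. X \<notin> U \<and> (\<forall>j. finite {n\<in>M. K j n \<inter> X = {}})"
    then obtain X where X: "X \<notin> U" "\<And>j. finite {n\<in>M. K j n \<inter> X = {}}" by blast
    define hit where "hit = (\<lambda>n j. psi n \<inter> W j \<inter> {x. col x \<in> X})"
    have hitK: "(hit n j \<noteq> {}) = (K j n \<inter> X \<noteq> {})" for n j unfolding hit_def K_def by blast
    define jX where "jX = (\<lambda>n. if \<exists>j\<le>n. hit n j \<noteq> {} then Max {j. j \<le> n \<and> hit n j \<noteq> {}} else 0)"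
    define sel where "sel = (\<lambda>n. if hit n (jX n) \<noteq> {} then SOME x. x \<in> hit n (jX n) else SOME x. x \<in> psi n)"
    define Gd where "Gd = (\<lambda>j. {n\<in>M. j \<le> n \<and> K j n \<inter> X \<noteq> {}})"
    have Gdf: "finite (M - Gd j)" for j
    proof -
      have "M - Gd j \<subseteq> {n\<in>M. K j n \<inter> X = {}} \<union> {..<j}" unfolding Gd_def by auto
      thus ?thesis using X(2)[of j] finite_subset by blast
    qed
    have s1: "n \<in> M \<Longrightarrow> sel n \<in> psi n" for n
    proof -
      assume n: "n \<in> M"
      show ?thesis
      proof (cases "hit n (jX n) \<noteq> {}")
        case True
        hence "sel n \<in> hit n (jX n)" unfolding sel_def by (simp add: some_in_eq)
        thus ?thesis unfolding hit_def by blast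
      next
        case False
        hence "sel n = (SOME x. x \<in> psi n)" unfolding sel_def by simp
        thus ?thesis using g1 n by (simp add: some_in_eq)
      qed
    qed
    have s2: "n \<in> Gd j \<Longrightarrow> j \<le> jX n \<and> sel n \<in> hit n (jX n)" for n j
    proof -
      assume n: "n \<in> Gd j"
      hence jn: "j \<le> n" and hj: "hit n j \<noteq> {}" unfolding Gd_def using hitK by auto
      define Q where "Q = {j. j \<le> n \<and> hit n j \<noteq> {}}"
      have Qf: "finite Q" unfolding Q_def by (rule finite_subset[of _ "{..n}"]) auto
      have jQ: "j \<in> Q" using jn hj Q_def by simp
      have ex: "\<exists>j\<le>n. hit n j \<noteq> {}" using jn hj by blast
      have jX: "jX n = Max Q" unfolding jX_def Q_def using ex by simp
      have "Max Q \<in> Q" using Qf jQ by (metis Max_in empty_iff)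
      hence h: "hit n (jX n) \<noteq> {}" using jX Q_def by simp
      have "j \<le> jX n" using jX Qf jQ by simp
      moreover have "sel n \<in> hit n (jX n)" using h unfolding sel_def by (simp add: some_in_eq)
      ultimately show ?thesis by blast
    qed
    have s3: "n \<in> Gd j \<Longrightarrow> sel n \<in> W j \<and> col (sel n) \<in> X \<and> j \<le> col (sel n)" for n j
    proof -
      assume n: "n \<in> Gd j"
      have a: "j \<le> jX n" "sel n \<in> hit n (jX n)" using s2[OF n] by blast+
      hence "sel n \<in> W (jX n)" "col (sel n) \<in> X" unfolding hit_def by blast+
      moreover hence "sel n \<in> W j" using Wanti[OF a(1)] by blast
      moreover have "jX n \<le> col (sel n)" using Wge \<open>sel n \<in> W (jX n)\<close> by blast
      ultimately show ?thesis using a(1) by simp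
    qed
    have fto: "finite {n\<in>M. sel n = x}" for x
    proof -
      have "{n\<in>M. sel n = x} \<subseteq> M - Gd (Suc (col x))"
      proof
        fix n assume n: "n \<in> {n\<in>M. sel n = x}"
        show "n \<in> M - Gd (Suc (col x))"
        proof (rule ccontr)
          assume "n \<notin> M - Gd (Suc (col x))"
          hence "n \<in> Gd (Suc (col x))" using n by blast
          hence "Suc (col x) \<le> col (sel n)" using s3 by blast
          thus False using n by simp
        qed
      qed
      thus ?thesis using Gdf finite_subset by blast
    qed
    have selW: "almost_subset (sel ` M) (W j)" for j
    proof -
      have "sel ` M - W j \<subseteq> sel ` (M - Gd j)" using s3 by blast
      thus ?thesis unfolding almost_subset_def using Gdf finite_subset by blast
    qed
    have selB: "\<forall>x\<in>P. almost_subset (sel ` M) (B x)"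
    proof
      fix x assume "x \<in> P"
      then obtain i where i: "ee i = x" using eesurj by blast
      have "almost_subset (sel ` M) (B (ee i))" by (rule as_mono2[OF WeeB[of i] selW[of i]])
      thus "almost_subset (sel ` M) (B x)" using i by simp
    qed
    have selBb: "almost_subset (sel ` M) Bbase" by (rule as_mono2[OF WB[of 0] selW[of 0]])
    have selc: "colfin (sel ` M)" using colfin_almost[OF colfin_Bbase selBb] .
    have selU: "col ` sel ` M \<notin> U"
    proof -
      have "col ` sel ` M \<subseteq> X \<union> col ` sel ` (M - Gd 0)"
      proof
        fix y assume "y \<in> col ` sel ` M"
        then obtain n where n: "n \<in> M" "y = col (sel n)" by blast
        show "y \<in> X \<union> col ` sel ` (M - Gd 0)"
        proof (cases "n \<in> Gd 0")
          case True thus ?thesis using s3[OF True] n by simp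
        next
          case False thus ?thesis using n by blast
        qed
      qed
      moreover have "finite (col ` sel ` (M - Gd 0))" using Gdf[of 0] by blast
      hence "col ` sel ` (M - Gd 0) \<notin> U" using fu_fin[OF u] by blast
      hence "X \<union> col ` sel ` (M - Gd 0) \<notin> U" using fu_Un[OF u X(1)] by blast
      ultimately show ?thesis using fu_sub_notin[OF u] by blast
    qed
    define A2 where "A2 = A1 \<union> sel ` M"
    define B2 where "B2 = B1 \<union> sel ` M"
    have c1: "SelK psi M A2" unfolding SelK_def A2_def
      by (rule exI[of _ sel]) (use s1 fto in blast)
    have c2: "colfin B2" unfolding B2_def using colfin_Un[OF AB1(4) selc] .
    have c3: "bigU U B2" by (rule bigU_mono[OF u c2 AB1(3)]) (simp add: B2_def)
    have c4: "col ` A2 \<notin> U" unfolding A2_def using fu_Un[OF u AB1(2) selU] by (simp add: image_Un)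
    have sub: "A2 - A1 \<subseteq> sel ` M" unfolding A2_def by blast
    have c5: "\<forall>x\<in>P. almost_subset (A2 - A1) (B x)" using as_mono1[OF sub] selB by blast
    have c6: "almost_subset (A2 - A1) Bbase" using as_mono1[OF sub selBb] .
    have c7: "A1 \<subseteq> A2" "A2 \<subseteq> B2" "B2 \<subseteq> B1 \<union> A2" unfolding A2_def B2_def using AB1(1) by blast+
    show ?thesis
      apply (rule exI[of _ A2], rule exI[of _ B2])
      using c1 c2 c3 c4 c5 c6 c7 by simp
  qed
qed

lemma tight2_step:
  assumes pp: "P_point U" and AB2: "A2 \<subseteq> B2" "col ` A2 \<notin> U" "bigU U B2" "colfin B2"
  shows "\<exists>A3 B3. A2 \<subseteq> A3 \<and> B3 \<subseteq> B2 \<and> A3 \<subseteq> B2 \<and> almost_subset A3 B3 \<and> col ` A3 \<notin> U \<and> bigU U B3 \<and>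
     (almost_subset B3 E \<or> \<not> almost_subset A3 E)"
proof -
  have u: "fu U" using pp pp_fu by blast
  show ?thesis
  proof (cases "almost_subset A2 E")
    case False
    thus ?thesis using AB2 by (rule_tac exI[of _ A2], rule_tac exI[of _ B2]) (simp add: as_subset)
  next
    case AE: True
    show ?thesis
    proof (cases "bigU U (B2 \<inter> E)")
      case True
      have "almost_subset A2 (B2 \<inter> E)" using as_Int[OF as_subset[OF AB2(1)] AE] .
      moreover have "almost_subset (B2 \<inter> E) E" by (rule as_subset) blast
      ultimately show ?thesis using AB2 True by (rule_tac exI[of _ A2], rule_tac exI[of _ "B2 \<inter> E"]) auto
    next
      case False
      then obtain m where m: "{n. m \<le> csz (B2 \<inter> E) n} \<notin> U" unfolding bigU_def by blast
      define S where "S = - {n. m \<le> csz (B2 \<inter> E) n} \<inter> {n. Suc m \<le> csz B2 n}"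
      have SU: "S \<in> U" unfolding S_def using m AB2(3) fu_compl[OF u] fu_Int[OF u] unfolding bigU_def by blast
      obtain S2 where S2: "S2 \<subseteq> S" "infinite S2" "S2 \<notin> U" using fu_split[OF u fu_inf[OF u SU]] by blast
      have nonemp: "n \<in> S \<Longrightarrow> (B2 - E) \<inter> colset n \<noteq> {}" for n
      proof
        assume n: "n \<in> S" "(B2 - E) \<inter> colset n = {}"
        hence "B2 \<inter> colset n = (B2 \<inter> E) \<inter> colset n" by blast
        hence "csz B2 n = csz (B2 \<inter> E) n" unfolding csz_def by simp
        moreover have "\<not> m \<le> csz (B2 \<inter> E) n" "Suc m \<le> csz B2 n" using n(1) unfolding S_def by auto
        ultimately show False by simp
      qed
      define dp where "dp = (\<lambda>n. SOME x. x \<in> (B2 - E) \<inter> colset n)"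
      have dp: "n \<in> S \<Longrightarrow> dp n \<in> (B2 - E) \<inter> colset n" for n
      proof -
        assume "n \<in> S"
        hence "\<exists>x. x \<in> (B2 - E) \<inter> colset n" using nonemp by blast
        thus ?thesis unfolding dp_def by (rule someI_ex)
      qed
      define D where "D = dp ` S2"
      have DB: "D \<subseteq> B2 - E" unfolding D_def using dp S2(1) by blast
      have colD: "col ` D = S2"
      proof -
        have "col (dp n) = n" if "n \<in> S2" for n using dp[of n] S2(1) that by auto
        thus ?thesis unfolding D_def by (simp add: image_image cong: image_cong)
      qed
      have Dinf: "infinite D" using colD S2(2) by (metis finite_imageI)
      have c1: "A2 \<union> D \<subseteq> B2" using AB2(1) DB by blast
      have c2: "col ` (A2 \<union> D) \<notin> U" using fu_Un[OF u AB2(2)] colD S2(3) by (simp add: image_Un)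
      have c3: "\<not> almost_subset (A2 \<union> D) E"
      proof
        assume "almost_subset (A2 \<union> D) E"
        hence "finite ((A2 \<union> D) - E)" unfolding almost_subset_def .
        moreover have "D \<subseteq> (A2 \<union> D) - E" using DB by blast
        ultimately show False using Dinf finite_subset by blast
      qed
      show ?thesis
        apply (rule exI[of _ "A2 \<union> D"], rule exI[of _ B2])
        using c1 c2 c3 AB2(3) as_subset[OF c1] by simp
    qed
  qed
qed


definition invAB :: "nat set set \<Rightarrow> nat set \<Rightarrow> nat set \<Rightarrow> nat set \<Rightarrow> bool" where
  "invAB U Q A' B' \<longleftrightarrow> almost_subset (Abase Q) A' \<and> B' \<subseteq> Bbase \<and> almost_subset A' B' \<and> col ` A' \<notin> U \<and> bigU U B'"

definition histok :: "nat set set \<Rightarrow> nat set \<Rightarrow> nat set set \<Rightarrow> (nat set \<Rightarrow> nat set) \<Rightarrow> (nat set \<Rightarrow> nat set) \<Rightarrow> bool" where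
  "histok U Q P A B \<longleftrightarrow> countable P \<and> (\<forall>x\<in>P. invAB U Q (A x) (B x)) \<and>
     (\<forall>x\<in>P. \<forall>y\<in>P. almost_subset (A x) (B y)) \<and> aschain (B ` P)"

definition stspec :: "nat set set \<Rightarrow> nat set \<Rightarrow> nat set set \<Rightarrow> (nat set \<Rightarrow> nat set) \<Rightarrow> (nat set \<Rightarrow> nat set) \<Rightarrow>
    nat set \<Rightarrow> (nat \<Rightarrow> nat) \<Rightarrow> (nat \<Rightarrow> nat set) \<Rightarrow> nat set \<Rightarrow> nat \<Rightarrow> nat set \<Rightarrow> nat set \<Rightarrow> bool" where
  "stspec U Q P A B E f psi M c A' B' \<longleftrightarrow>
    (\<forall>x\<in>P. almost_subset (A x) A' \<and> almost_subset A' (B x) \<and> almost_subset B' (B x)) \<and>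
    invAB U Q A' B' \<and>
    ((\<forall>x\<in>P. almost_subset E (B x)) \<and> almost_subset E Bbase \<longrightarrow> almost_subset E A' \<or> \<not> almost_subset E B') \<and>
    (almost_subset B' E \<or> \<not> almost_subset A' E) \<and>
    {n. pt n (f n) \<in> B'} \<notin> U \<and>
    B' \<inter> colset c = {} \<and>
    (psigood P B psi M \<longrightarrow> SelK psi M A' \<or> KillK P B psi M B')"

lemma SelK_mono: "SelK psi M A \<Longrightarrow> A \<subseteq> A' \<Longrightarrow> SelK psi M A'"
  unfolding SelK_def by blast
lemma KillK_mono: "KillK P B psi M B2 \<Longrightarrow> B' \<subseteq> B2 \<Longrightarrow> KillK P B psi M B'"
  unfolding KillK_def by blast

lemma aschain_sub: "aschain F \<Longrightarrow> G \<subseteq> F \<Longrightarrow> aschain G" unfolding aschain_def by blast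

lemma stage:
  assumes pp: "P_point U" and Q: "Q \<notin> U" and h: "histok U Q P A B"
  shows "\<exists>A' B'. stspec U Q P A B E f psi M c A' B'"
proof -
  have u: "fu U" using pp pp_fu by blast
  have Pc: "countable P" and inv: "\<And>x. x \<in> P \<Longrightarrow> invAB U Q (A x) (B x)"
    and AB: "\<And>x y. x \<in> P \<Longrightarrow> y \<in> P \<Longrightarrow> almost_subset (A x) (B y)" and ch: "aschain (B ` P)"
    using h unfolding histok_def by blast+
  have BP: "\<forall>x\<in>P. B x \<subseteq> Bbase" using inv unfolding invAB_def by blast
  define ee where "ee = from_nat_into P"
  define a where "a = (\<lambda>i. case i of 0 \<Rightarrow> Abase Q | Suc j \<Rightarrow> if P = {} then Abase Q else A (ee j))"
  define b where "b = (\<lambda>i. case i of 0 \<Rightarrow> Bbase | Suc j \<Rightarrow> if P = {} then Bbase else B (ee j))"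
  have aPair: "(a i = Abase Q \<and> b i = Bbase) \<or> (\<exists>x\<in>P. a i = A x \<and> b i = B x)" for i
  proof (cases i)
    case 0 thus ?thesis unfolding a_def b_def by simp
  next
    case (Suc j)
    show ?thesis
    proof (cases "P = {}")
      case True thus ?thesis unfolding a_def b_def Suc by simp
    next
      case False
      hence "ee j \<in> P" unfolding ee_def using from_nat_into by blast
      thus ?thesis unfolding a_def b_def Suc using False by auto
    qed
  qed
  have surjP: "x \<in> P \<Longrightarrow> \<exists>i. a i = A x \<and> b i = B x" for x
  proof -
    assume x: "x \<in> P"
    then obtain j where "ee j = x" unfolding ee_def using from_nat_into_surj[OF Pc] by blast
    hence "a (Suc j) = A x \<and> b (Suc j) = B x" unfolding a_def b_def using x by auto
    thus ?thesis by blast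
  qed
  have a0: "a 0 = Abase Q" and b0: "b 0 = Bbase" unfolding a_def b_def by simp_all
  have invx: "almost_subset (Abase Q) (A x)" "B x \<subseteq> Bbase" "almost_subset (A x) (B x)" "col ` (A x) \<notin> U" "bigU U (B x)"
    if "x \<in> P" for x using inv[OF that] unfolding invAB_def by blast+
  have ab: "almost_subset (a i) (b k)" for i k
  proof -
    have q: "almost_subset (Abase Q) Bbase" using Abase_sub as_subset by blast
    from aPair[of i] aPair[of k] show ?thesis
    proof (elim disjE conjE bexE)
      assume "a i = Abase Q" "b k = Bbase" thus ?thesis using q by simp
    next
      fix y assume "a i = Abase Q" "y \<in> P" "a k = A y" "b k = B y"
      thus ?thesis using as_trans[OF invx(1) invx(3)] by simp
    next
      fix x assume "x \<in> P" "a i = A x" "b i = B x" "b k = Bbase"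
      thus ?thesis using as_mono2[OF invx(2) invx(3)] by simp
    next
      fix x y assume "x \<in> P" "a i = A x" "b i = B x" "y \<in> P" "a k = A y" "b k = B y"
      thus ?thesis using AB by simp
    qed
  qed
  have aU: "col ` (a i) \<notin> U" for i
    using aPair[of i] col_Abase[of Q] Q invx(4) by auto
  have bsub: "b k \<subseteq> Bbase" for k using aPair[of k] invx(2) by auto
  have bc: "colfin (b k)" for k using colfin_subset[OF colfin_Bbase bsub] .
  have bU: "bigU U (b k)" for k using aPair[of k] invx(5) bigU_Bbase[OF u] by auto
  have chb: "aschain (range b)"
  proof -
    have "aschain (insert Bbase (B ` P))" unfolding aschain_def
    proof (intro ballI)
      fix X Y assume XY: "X \<in> insert Bbase (B ` P)" "Y \<in> insert Bbase (B ` P)"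
      have sb: "Z \<in> insert Bbase (B ` P) \<Longrightarrow> Z \<subseteq> Bbase" for Z using BP by auto
      show "almost_subset X Y \<or> almost_subset Y X"
      proof (cases "X = Bbase \<or> Y = Bbase")
        case True thus ?thesis using sb[OF XY(1)] sb[OF XY(2)] as_subset by blast
      next
        case False
        hence "X \<in> B ` P" "Y \<in> B ` P" using XY by auto
        thus ?thesis using ch unfolding aschain_def by blast
      qed
    qed
    moreover have "range b \<subseteq> insert Bbase (B ` P)" using aPair by blast
    ultimately show ?thesis by (rule aschain_sub)
  qed
  obtain C where C: "\<forall>i. almost_subset (a i) C" "\<forall>k. almost_subset C (b k)" "col ` C \<notin> U" "C \<subseteq> b 0"
    using interp[of U a b, OF pp ab aU bc[of 0]] by blast
  obtain G where G: "\<forall>k. almost_subset G (b k)" "bigU U G" "G \<subseteq> b 0"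
    using pseudoG[of U b, OF pp chb bc bU] by blast
  have CB: "almost_subset C (B x) \<and> almost_subset G (B x) \<and> almost_subset (A x) C" if xP: "x \<in> P" for x
  proof -
    obtain i where i: "a i = A x" "b i = B x" using surjP[OF xP] by blast
    show ?thesis using C(1)[rule_format, of i] C(2)[rule_format, of i] G(1)[rule_format, of i] i by simp
  qed
  have CB1: "x \<in> P \<Longrightarrow> almost_subset C (B x)" and CB2: "x \<in> P \<Longrightarrow> almost_subset G (B x)"
    and CB3: "x \<in> P \<Longrightarrow> almost_subset (A x) C" for x using CB by blast+
  have CBb: "C \<subseteq> Bbase" "G \<subseteq> Bbase" using C(4) G(3) b0 by auto
  define t1 where "t1 = ((\<forall>x\<in>P. almost_subset E (B x)) \<and> almost_subset E Bbase)"
  define addE where "addE = (t1 \<and> col ` E \<notin> U)"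
  define E1 where "E1 = (if addE then E else {})"
  have E1B: "almost_subset E1 (B x)" if "x \<in> P" for x
    using that unfolding E1_def addE_def t1_def by (auto simp: almost_subset_def)
  have E1Bb: "almost_subset E1 Bbase" unfolding E1_def addE_def t1_def by (auto simp: almost_subset_def)
  have E1U: "col ` E1 \<notin> U" unfolding E1_def addE_def using fu_empty[OF u] by auto
  define A1 where "A1 = C \<union> E1"
  define B1 where "B1 = G \<union> C \<union> E1"
  have AB1: "A1 \<subseteq> B1" unfolding A1_def B1_def by blast
  have A1U: "col ` A1 \<notin> U" unfolding A1_def using fu_Un[OF u C(3) E1U] by (simp add: image_Un)
  have B1c: "colfin B1" unfolding B1_def
    using colfin_Un[OF colfin_Un[OF colfin_subset[OF colfin_Bbase CBb(2)] colfin_subset[OF colfin_Bbase CBb(1)]]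
      colfin_almost[OF colfin_Bbase E1Bb]] .
  have B1U: "bigU U B1" using bigU_mono[OF u B1c G(2)] unfolding B1_def by blast
  have B1B: "almost_subset B1 (B x)" if "x \<in> P" for x
    unfolding B1_def using as_Un[OF as_Un[OF CB2[OF that] CB1[OF that]] E1B[OF that]] .
  have B1Bb: "almost_subset B1 Bbase" unfolding B1_def
    using as_Un[OF as_Un[OF as_subset[OF CBb(2)] as_subset[OF CBb(1)]] E1Bb] .
  obtain A2 B2 where AB2: "A1 \<subseteq> A2" "A2 \<subseteq> B2" "B2 \<subseteq> B1 \<union> A2" "col ` A2 \<notin> U" "bigU U B2" "colfin B2"
     "\<forall>x\<in>P. almost_subset (A2 - A1) (B x)" "almost_subset (A2 - A1) Bbase"
     "psigood P B psi M \<longrightarrow> SelK psi M A2 \<or> KillK P B psi M B2"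
  proof (cases "psigood P B psi M")
    case True
    from psi_step[OF pp Pc BP AB1 A1U B1U B1c True] show ?thesis using that by blast
  next
    case False
    show ?thesis by (rule that[of A1 B1]) (use AB1 A1U B1U B1c False in \<open>auto simp: almost_subset_def\<close>)
  qed
  have B2sub: "B2 \<subseteq> B1 \<union> (A2 - A1)" using AB2(3) AB1 by blast
  have B2B: "almost_subset B2 (B x)" if "x \<in> P" for x
    using as_mono1[OF B2sub as_Un[OF B1B[OF that] AB2(7)[rule_format, OF that]]] .
  have B2Bb: "almost_subset B2 Bbase" using as_mono1[OF B2sub as_Un[OF B1Bb AB2(8)]] .
  obtain A3 B3 where AB3: "A2 \<subseteq> A3" "B3 \<subseteq> B2" "A3 \<subseteq> B2" "almost_subset A3 B3" "col ` A3 \<notin> U" "bigU U B3"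
      "almost_subset B3 E \<or> \<not> almost_subset A3 E"
    using tight2_step[OF pp AB2(2) AB2(4) AB2(5) AB2(6), of E] by blast
  have A3c: "colfin A3" using colfin_subset[OF AB2(6) AB3(3)] .
  have B3c: "colfin B3" using colfin_subset[OF AB2(6) AB3(2)] .
  define Y where "Y = - col ` A3"
  have YU: "Y \<in> U" unfolding Y_def using AB3(5) fu_compl[OF u] by blast
  define killE where "killE = (t1 \<and> col ` E \<in> U)"
  define pe where "pe = (\<lambda>n. SOME x. x \<in> E \<inter> colset n)"
  define RE where "RE = (if killE then pe ` (Y \<inter> col ` E) else {})"
  define Rf where "Rf = (\<lambda>n. pt n (f n)) ` Y"
  define B' where "B' = (B3 \<inter> Bbase) - (Rf \<union> RE) - colset c"
  have pe: "n \<in> col ` E \<Longrightarrow> pe n \<in> E \<inter> colset n" for n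
  proof -
    assume "n \<in> col ` E"
    hence "\<exists>x. x \<in> E \<inter> colset n" by auto
    thus ?thesis unfolding pe_def by (rule someI_ex)
  qed
  have REcol: "x \<in> RE \<Longrightarrow> col x \<in> Y" for x
    unfolding RE_def using pe by (auto split: if_splits)
  have Rfcol: "x \<in> Rf \<Longrightarrow> col x \<in> Y" for x unfolding Rf_def by auto
  have A3R: "A3 \<inter> (Rf \<union> RE) = {}"
  proof (rule ccontr)
    assume "A3 \<inter> (Rf \<union> RE) \<noteq> {}"
    then obtain x where "x \<in> A3" "x \<in> Rf \<union> RE" by blast
    hence "col x \<in> Y" "col x \<in> col ` A3" using REcol Rfcol by blast+
    thus False unfolding Y_def by blast
  qed
  have c1: "\<forall>x\<in>P. almost_subset (A x) A3 \<and> almost_subset A3 (B x) \<and> almost_subset B' (B x)"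
  proof
    fix x assume x: "x \<in> P"
    have "C \<subseteq> A3" using AB2(1) AB3(1) unfolding A1_def by blast
    hence "almost_subset (A x) A3" using as_mono2 CB3[OF x] by blast
    moreover have "almost_subset A3 (B x)" using as_mono1[OF AB3(3) B2B[OF x]] .
    moreover have "B' \<subseteq> B2" unfolding B'_def using AB3(2) by blast
    hence "almost_subset B' (B x)" using as_mono1 B2B[OF x] by blast
    ultimately show "almost_subset (A x) A3 \<and> almost_subset A3 (B x) \<and> almost_subset B' (B x)" by blast
  qed
  have c2: "invAB U Q A3 B'"
    unfolding invAB_def
  proof (intro conjI)
    have "C \<subseteq> A3" using AB2(1) AB3(1) unfolding A1_def by blast
    thus "almost_subset (Abase Q) A3" using as_mono2 C(1) a0 by metis
    show "B' \<subseteq> Bbase" unfolding B'_def by blast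
    show "col ` A3 \<notin> U" by (rule AB3(5))
    have A3Bb: "almost_subset A3 Bbase" using as_mono1[OF AB3(3) B2Bb] .
    have "almost_subset A3 (B3 \<inter> Bbase)" using as_Int[OF AB3(4) A3Bb] .
    moreover have "A3 - B' \<subseteq> (A3 - (B3 \<inter> Bbase)) \<union> (A3 \<inter> colset c)" unfolding B'_def using A3R by blast
    moreover have "finite (A3 \<inter> colset c)" using A3c unfolding colfin_def by blast
    ultimately show "almost_subset A3 B'" unfolding almost_subset_def using finite_subset by blast
    have "finite (B3 - Bbase)" using as_mono1[OF AB3(2) B2Bb] unfolding almost_subset_def .
    hence "bigU U (B3 - (B3 - Bbase))" using bigU_diff_fin[OF u B3c AB3(6)] by blast
    moreover have "B3 - (B3 - Bbase) = B3 \<inter> Bbase" by blast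
    ultimately have b1: "bigU U (B3 \<inter> Bbase)" by simp
    have b1c: "colfin (B3 \<inter> Bbase)" using colfin_subset[OF B3c] by blast
    have "(Rf \<union> RE) \<inter> colset n \<subseteq> {pt n (f n), pe n}" for n
    proof
      fix x assume x: "x \<in> (Rf \<union> RE) \<inter> colset n"
      show "x \<in> {pt n (f n), pe n}"
      proof (cases "x \<in> Rf")
        case True
        then obtain m where "x = pt m (f m)" unfolding Rf_def by blast
        thus ?thesis using x by simp
      next
        case False
        hence "x \<in> RE" using x by blast
        then obtain m where m: "m \<in> col ` E" "x = pe m" unfolding RE_def by (auto split: if_splits)
        have "col (pe m) = m" using pe[OF m(1)] by simp
        thus ?thesis using x m by simp
      qed
    qed
    hence "finite ((Rf \<union> RE) \<inter> colset n) \<and> card ((Rf \<union> RE) \<inter> colset n) \<le> 2" for n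
    proof -
      fix n
      have s: "(Rf \<union> RE) \<inter> colset n \<subseteq> {pt n (f n), pe n}" by fact
      have f2: "finite {pt n (f n), pe n}" by simp
      have c2: "card {pt n (f n), pe n} \<le> 2" by (cases "pt n (f n) = pe n") auto
      show "finite ((Rf \<union> RE) \<inter> colset n) \<and> card ((Rf \<union> RE) \<inter> colset n) \<le> 2"
        using finite_subset[OF s f2] card_mono[OF f2 s] c2 by linarith
    qed
    hence "bigU U ((B3 \<inter> Bbase) - (Rf \<union> RE))" using bigU_diff_k[OF u b1c b1] by blast
    thus "bigU U B'" unfolding B'_def using bigU_diff_col[OF u] by blast
  qed
  have c3: "t1 \<longrightarrow> almost_subset E A3 \<or> \<not> almost_subset E B'"
  proof
    assume t: t1
    show "almost_subset E A3 \<or> \<not> almost_subset E B'"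
    proof (cases "col ` E \<in> U")
      case False
      hence "E \<subseteq> A3" using t AB2(1) AB3(1) unfolding A1_def E1_def addE_def by auto
      thus ?thesis using as_subset by blast
    next
      case True
      hence kE: killE using t unfolding killE_def by blast
      have REE: "RE \<subseteq> E - B'" unfolding RE_def B'_def using kE pe by auto
      have "col ` RE = Y \<inter> col ` E"
      proof -
        have "col (pe n) = n" if "n \<in> Y \<inter> col ` E" for n using pe that by auto
        hence "(\<lambda>n. col (pe n)) ` (Y \<inter> col ` E) = (\<lambda>n. n) ` (Y \<inter> col ` E)" by (rule image_cong[OF refl])
        thus ?thesis unfolding RE_def using kE by (simp add: image_image)
      qed
      moreover have "Y \<inter> col ` E \<in> U" using YU True fu_Int[OF u] by blast
      ultimately have "infinite RE" using fu_inf[OF u] by (metis finite_imageI)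
      hence "\<not> almost_subset E B'" unfolding almost_subset_def using REE finite_subset by blast
      thus ?thesis by blast
    qed
  qed
  have c4: "almost_subset B' E \<or> \<not> almost_subset A3 E"
  proof -
    have "B' \<subseteq> B3" unfolding B'_def by blast
    thus ?thesis using AB3(7) as_mono1 by blast
  qed
  have c5: "{n. pt n (f n) \<in> B'} \<notin> U"
  proof -
    have "{n. pt n (f n) \<in> B'} \<subseteq> - Y" unfolding B'_def Rf_def by auto
    moreover have "- Y \<notin> U" using YU fu_compl[OF u] by simp
    ultimately show ?thesis using fu_sub_notin[OF u] by blast
  qed
  have c6: "B' \<inter> colset c = {}" unfolding B'_def by blast
  have c7: "psigood P B psi M \<longrightarrow> SelK psi M A3 \<or> KillK P B psi M B'"
  proof
    assume "psigood P B psi M"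
    hence "SelK psi M A2 \<or> KillK P B psi M B2" using AB2(9) by blast
    moreover have "B' \<subseteq> B2" unfolding B'_def using AB3(2) by blast
    ultimately show "SelK psi M A3 \<or> KillK P B psi M B'" using SelK_mono KillK_mono AB3(1) by blast
  qed
  have "stspec U Q P A B E f psi M c A3 B'"
    unfolding stspec_def using c1 c2 c3 c4 c5 c6 c7 unfolding t1_def by blast
  thus ?thesis by blast
qed


section \<open>Topologies\<close>

lemma Field_ne: "Field omega1 \<noteq> {}" using o1_Field_uncountable by auto

definition nbh :: "(nat set \<Rightarrow> nat set) \<Rightarrow> nat set set \<Rightarrow> nat option set" where
  "nbh B F = (\<Inter>a\<in>F. insert None (Some ` B a))"
definition okF :: "nat set set \<Rightarrow> bool" where
  "okF F \<longleftrightarrow> finite F \<and> F \<noteq> {} \<and> F \<subseteq> Field omega1"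

lemma nbh_Un: "nbh B (F1 \<union> F2) = nbh B F1 \<inter> nbh B F2" unfolding nbh_def by blast
lemma okF_Un: "okF F1 \<Longrightarrow> okF F2 \<Longrightarrow> okF (F1 \<union> F2)" unfolding okF_def by auto

lemma gap_istop': "istopology (\<lambda>V. None \<in> V \<longrightarrow> (\<exists>F. okF F \<and> nbh B F \<subseteq> V))"
  unfolding istopology_def
proof (intro conjI allI impI)
  fix S T
  assume S: "None \<in> S \<longrightarrow> (\<exists>F. okF F \<and> nbh B F \<subseteq> S)" and T: "None \<in> T \<longrightarrow> (\<exists>F. okF F \<and> nbh B F \<subseteq> T)"
    and N: "None \<in> S \<inter> T"
  obtain F1 where F1: "okF F1" "nbh B F1 \<subseteq> S" using S N by blast
  obtain F2 where F2: "okF F2" "nbh B F2 \<subseteq> T" using T N by blast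
  have "okF (F1 \<union> F2)" using okF_Un[OF F1(1) F2(1)] .
  moreover have "nbh B (F1 \<union> F2) \<subseteq> S \<inter> T" unfolding nbh_Un using F1(2) F2(2) by blast
  ultimately show "\<exists>F. okF F \<and> nbh B F \<subseteq> S \<inter> T" by blast
next
  fix K :: "nat option set set"
  assume K: "\<forall>S\<in>K. None \<in> S \<longrightarrow> (\<exists>F. okF F \<and> nbh B F \<subseteq> S)" and N: "None \<in> \<Union>K"
  then obtain S where S: "S \<in> K" "None \<in> S" by blast
  then obtain F where "okF F" "nbh B F \<subseteq> S" using K by blast
  thus "\<exists>F. okF F \<and> nbh B F \<subseteq> \<Union>K" using S(1) by blast
qed

lemma gap_eq: "gap_space B = topology (\<lambda>V. None \<in> V \<longrightarrow> (\<exists>F. okF F \<and> nbh B F \<subseteq> V))"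
  unfolding gap_space_def okF_def nbh_def by (simp add: conj_assoc)

lemma gap_open: "openin (gap_space B) V \<longleftrightarrow> (None \<in> V \<longrightarrow> (\<exists>F. okF F \<and> nbh B F \<subseteq> V))"
  unfolding gap_eq using gap_istop'[of B] by simp

lemma gap_top: "topspace (gap_space B) = UNIV"
proof -
  obtain a where a: "a \<in> Field omega1" using Field_ne by blast
  have "okF {a}" unfolding okF_def using a by simp
  hence "openin (gap_space B) UNIV" unfolding gap_open by blast
  hence "UNIV \<subseteq> topspace (gap_space B)" by (rule openin_subset)
  thus ?thesis by blast
qed

lemma gap_basic: "okF F \<Longrightarrow> openin (gap_space B) (nbh B F)"
  unfolding gap_open by blast

definition filt :: "nat set set \<Rightarrow> bool" where
  "filt V \<longleftrightarrow> UNIV \<in> V \<and> (\<forall>A B. A \<in> V \<longrightarrow> B \<in> V \<longrightarrow> A \<inter> B \<in> V)"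

lemma fs_istop: "filt V \<Longrightarrow> istopology (\<lambda>W. None \<in> W \<longrightarrow> (\<exists>A\<in>V. insert None (Some ` A) \<subseteq> W))"
  unfolding istopology_def
proof (intro conjI allI impI)
  fix S T assume V: "filt V"
    and S: "None \<in> S \<longrightarrow> (\<exists>A\<in>V. insert None (Some ` A) \<subseteq> S)" and T: "None \<in> T \<longrightarrow> (\<exists>A\<in>V. insert None (Some ` A) \<subseteq> T)"
    and N: "None \<in> S \<inter> T"
  obtain A1 where A1: "A1 \<in> V" "insert None (Some ` A1) \<subseteq> S" using S N by blast
  obtain A2 where A2: "A2 \<in> V" "insert None (Some ` A2) \<subseteq> T" using T N by blast
  have "A1 \<inter> A2 \<in> V" using V A1(1) A2(1) unfolding filt_def by blast
  moreover have "insert None (Some ` (A1 \<inter> A2)) \<subseteq> S \<inter> T" using A1(2) A2(2) by blast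
  ultimately show "\<exists>A\<in>V. insert None (Some ` A) \<subseteq> S \<inter> T" by blast
next
  fix K :: "nat option set set"
  assume K: "\<forall>S\<in>K. None \<in> S \<longrightarrow> (\<exists>A\<in>V. insert None (Some ` A) \<subseteq> S)" and N: "None \<in> \<Union>K"
  then obtain S where S: "S \<in> K" "None \<in> S" by blast
  then obtain A where "A \<in> V" "insert None (Some ` A) \<subseteq> S" using K by blast
  thus "\<exists>A\<in>V. insert None (Some ` A) \<subseteq> \<Union>K" using S(1) by blast
qed

lemma fs_open: "filt V \<Longrightarrow> openin (filter_space V) W \<longleftrightarrow> (None \<in> W \<longrightarrow> (\<exists>A\<in>V. insert None (Some ` A) \<subseteq> W))"
  unfolding filter_space_def using fs_istop by simp

lemma fs_top: "filt V \<Longrightarrow> topspace (filter_space V) = UNIV"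
proof -
  assume f: "filt V"
  have "openin (filter_space V) UNIV" unfolding fs_open[OF f] using f unfolding filt_def by blast
  hence "UNIV \<subseteq> topspace (filter_space V)" by (rule openin_subset)
  thus ?thesis by blast
qed

lemma filt_cof: "filt {A. finite (- A)}" unfolding filt_def by auto

lemma filt_fu: "fu U \<Longrightarrow> filt U" unfolding filt_def using fu_UNIV fu_Int by blast

lemma cont_UNIV: "topspace X = UNIV \<Longrightarrow> topspace Y = UNIV \<Longrightarrow>
   continuous_map Y X s \<longleftrightarrow> (\<forall>V. openin X V \<longrightarrow> openin Y (s -` V))"
proof -
  assume X: "topspace X = UNIV" and Y: "topspace Y = UNIV"
  have "s \<in> topspace Y \<rightarrow> topspace X" using X by simp
  moreover have "{x \<in> topspace Y. s x \<in> V} = s -` V" for V using Y by auto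
  ultimately show ?thesis unfolding continuous_map_def by simp
qed

lemma closed_UNIV: "topspace X = UNIV \<Longrightarrow> closedin X S \<longleftrightarrow> openin X (- S)"
proof -
  assume X: "topspace X = UNIV"
  have "topspace X - S = - S" using X by auto
  thus ?thesis unfolding closedin_def using X by simp
qed

lemma o1_max:
  assumes "finite F" "F \<noteq> {}" "F \<subseteq> Field omega1"
  shows "\<exists>m\<in>F. \<forall>a\<in>F. a = m \<or> a \<in> underS omega1 m"
  using assms
proof (induct F rule: finite_ne_induct)
  case (singleton x) thus ?case by simp
next
  case (insert y F)
  have "F \<subseteq> Field omega1" using insert(5) by blast
  then obtain m where m: "m \<in> F" "\<forall>a\<in>F. a = m \<or> a \<in> underS omega1 m" using insert(4) by blast
  have yF: "y \<in> Field omega1" using insert(5) by blast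
  have mF: "m \<in> Field omega1" using insert(5) m(1) by blast
  have "y = m \<or> y \<in> underS omega1 m \<or> m \<in> underS omega1 y" using o1_cases[OF yF mF] .
  thus ?case
  proof (elim disjE)
    assume "y = m"
    hence "\<forall>a\<in>insert y F. a = m \<or> a \<in> underS omega1 m" using m(2) by simp
    thus ?case using m(1) by blast
  next
    assume "y \<in> underS omega1 m"
    hence "\<forall>a\<in>insert y F. a = m \<or> a \<in> underS omega1 m" using m(2) by simp
    thus ?case using m(1) by blast
  next
    assume my: "m \<in> underS omega1 y"
    have "\<forall>a\<in>insert y F. a = y \<or> a \<in> underS omega1 y"
    proof
      fix a assume "a \<in> insert y F"
      hence "a = y \<or> a = m \<or> a \<in> underS omega1 m" using m(2) by blast
      thus "a = y \<or> a \<in> underS omega1 y" using my o1_underS_trans[of m y a] by blast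
    qed
    thus ?case by blast
  qed
qed


lemma nbh_mem: "z \<in> nbh B F \<longleftrightarrow> (\<forall>a\<in>F. z = None \<or> (\<exists>x. z = Some x \<and> x \<in> B a))"
  unfolding nbh_def by blast

lemma nbh_Some: "Some x \<in> nbh B F \<longleftrightarrow> x \<in> \<Inter>(B ` F)"
  unfolding nbh_def by blast

lemma nbh_None: "None \<in> nbh B F" unfolding nbh_def by blast

lemma okF_single: "a \<in> Field omega1 \<Longrightarrow> okF {a}" unfolding okF_def by simp

lemma not_sel:
  assumes u: "fu U"
    and colrem: "\<And>k. \<exists>a\<in>Field omega1. B a \<inter> colset k = {}"
    and bigB: "\<And>a. a \<in> Field omega1 \<Longrightarrow> bigU U (B a) \<and> colfin (B a)"
    and chainB: "\<And>a b. a \<in> Field omega1 \<Longrightarrow> b \<in> underS omega1 a \<Longrightarrow> almost_subset (B a) (B b)"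
    and kill: "\<And>f. \<exists>a\<in>Field omega1. {n. pt n (f n) \<in> B a} \<notin> U"
  shows "\<not> selective (filter_space U) (gap_space B)"
proof
  assume sel: "selective (filter_space U) (gap_space B)"
  have fU: "filt U" using filt_fu[OF u] .
  have tY: "topspace (filter_space U) = UNIV" using fs_top[OF fU] .
  have tX: "topspace (gap_space B) = UNIV" using gap_top .
  define phi where "phi = (\<lambda>y. case y of None \<Rightarrow> {None} | Some n \<Rightarrow> Some ` colset n)"
  have phiN: "phi None = {None}" unfolding phi_def by simp
  have phiS: "phi (Some n) = Some ` colset n" for n unfolding phi_def by simp
  have cl: "phi y \<noteq> {} \<and> closedin (gap_space B) (phi y)" for y
  proof (cases y)
    case None
    have "openin (gap_space B) (- {None})" unfolding gap_open by blast
    thus ?thesis using None phiN closed_UNIV[OF tX] by simp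
  next
    case (Some n)
    obtain a where a: "a \<in> Field omega1" "B a \<inter> colset n = {}" using colrem by blast
    have "nbh B {a} \<subseteq> - (Some ` colset n)" using a(2) unfolding nbh_def by auto
    hence "openin (gap_space B) (- (Some ` colset n))" unfolding gap_open using okF_single[OF a(1)] by blast
    moreover have "Some ` colset n \<noteq> {}" by (metis colset_iff col_pt empty_iff image_eqI)
    ultimately show ?thesis using Some phiS closed_UNIV[OF tX] by simp
  qed
  have lo: "openin (filter_space U) {y \<in> topspace (filter_space U). phi y \<inter> W \<noteq> {}}" if W: "openin (gap_space B) W" for W
    unfolding fs_open[OF fU] tY
  proof
    assume "None \<in> {y \<in> UNIV. phi y \<inter> W \<noteq> {}}"
    hence "None \<in> W" using phiN by auto
    then obtain F where F: "okF F" "nbh B F \<subseteq> W" using W unfolding gap_open by blast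
    have F': "finite F" "F \<noteq> {}" "F \<subseteq> Field omega1" using F(1) unfolding okF_def by blast+
    obtain m where m: "m \<in> F" "\<forall>a\<in>F. a = m \<or> a \<in> underS omega1 m" using o1_max[OF F'] by blast
    have mF: "m \<in> Field omega1" using m(1) F'(3) by blast
    define K where "K = (\<Union>a\<in>F. B m - B a)"
    have Kf: "finite K" unfolding K_def
    proof (rule finite_UN_I[OF F'(1)])
      fix a assume a: "a \<in> F"
      show "finite (B m - B a)"
      proof (cases "a = m")
        case True thus ?thesis by simp
      next
        case False
        hence "a \<in> underS omega1 m" using m(2) a by blast
        thus ?thesis using chainB[OF mF] unfolding almost_subset_def by blast
      qed
    qed
    define A0 where "A0 = {n. (B m - K) \<inter> colset n \<noteq> {}}"
    have A0U: "A0 \<in> U" unfolding A0_def using bigU_nonempty[OF u _ _ Kf] bigB[OF mF] by blast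
    have "insert None (Some ` A0) \<subseteq> {y \<in> UNIV. phi y \<inter> W \<noteq> {}}"
    proof
      fix y assume y: "y \<in> insert None (Some ` A0)"
      show "y \<in> {y \<in> UNIV. phi y \<inter> W \<noteq> {}}"
      proof (cases y)
        case None thus ?thesis using phiN \<open>None \<in> W\<close> by simp
      next
        case (Some n)
        hence "n \<in> A0" using y by auto
        hence "(B m - K) \<inter> colset n \<noteq> {}" unfolding A0_def by simp
        then obtain x where x: "x \<in> B m" "x \<notin> K" "col x = n" by (metis Diff_iff Int_emptyI colset_iff)
        have "x \<in> \<Inter>(B ` F)" using x(1,2) unfolding K_def by blast
        hence "Some x \<in> W" using F(2) nbh_Some by blast
        moreover have "Some x \<in> phi (Some n)" using phiS x(3) by simp
        ultimately show ?thesis using Some by blast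
      qed
    qed
    thus "\<exists>A\<in>U. insert None (Some ` A) \<subseteq> {y \<in> UNIV. phi y \<inter> W \<noteq> {}}" using A0U by blast
  qed
  have "lsc (filter_space U) (gap_space B) phi" unfolding lsc_def using cl lo by blast
  then obtain s where s: "continuous_map (filter_space U) (gap_space B) s" "\<forall>y\<in>topspace (filter_space U). s y \<in> phi y"
    using sel unfolding selective_def by blast
  have sy: "s y \<in> phi y" for y using s(2) tY by blast
  have sc: "openin (gap_space B) V \<Longrightarrow> openin (filter_space U) (s -` V)" for V
    using s(1) cont_UNIV[OF tX tY] by blast
  have sN: "s None = None" using sy[of None] phiN by simp
  define g where "g = (\<lambda>n. the (s (Some n)))"
  have g: "s (Some n) = Some (g n) \<and> col (g n) = n" for n
  proof -
    have "s (Some n) \<in> Some ` colset n" using sy[of "Some n"] phiS by simp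
    thus ?thesis unfolding g_def by auto
  qed
  define f where "f = (\<lambda>n. rowof (g n))"
  have fg: "pt n (f n) = g n" for n using g[of n] pt_colrow[of "g n"] unfolding f_def by simp
  obtain a where a: "a \<in> Field omega1" "{n. pt n (f n) \<in> B a} \<notin> U" using kill by blast
  have "openin (filter_space U) (s -` nbh B {a})" using sc gap_basic[OF okF_single[OF a(1)]] by blast
  moreover have "None \<in> s -` nbh B {a}" using sN nbh_None by simp
  ultimately obtain A0 where A0: "A0 \<in> U" "insert None (Some ` A0) \<subseteq> s -` nbh B {a}"
    unfolding fs_open[OF fU] by blast
  have "A0 \<subseteq> {n. pt n (f n) \<in> B a}"
  proof
    fix n assume "n \<in> A0"
    hence "s (Some n) \<in> nbh B {a}" using A0(2) by blast
    hence "g n \<in> B a" using g[of n] nbh_Some[of "g n" B "{a}"] by simp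
    thus "n \<in> {n. pt n (f n) \<in> B a}" using fg by simp
  qed
  thus False using a(2) A0(1) fu_mono[OF u] by blast
qed

lemma is_sel:
  assumes fieldAB: "\<And>a b. a \<in> Field omega1 \<Longrightarrow> b \<in> Field omega1 \<Longrightarrow> almost_subset (A a) (B b)"
    and colrem: "\<And>k. \<exists>a\<in>Field omega1. B a \<inter> colset k = {}"
    and psiH: "\<And>psi M g. g \<in> Field omega1 \<Longrightarrow> \<exists>a\<in>Field omega1. g \<in> underS omega1 a \<and>
        (psigood (underS omega1 a) B psi M \<longrightarrow> SelK psi M (A a) \<or> KillK (underS omega1 a) B psi M (B a))"
  shows "selective conv_seq (gap_space B)"
  unfolding selective_def
proof (intro allI impI)
  fix phi :: "nat option \<Rightarrow> nat option set"
  assume L: "lsc conv_seq (gap_space B) phi"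
  have fC: "filt {A. finite (- A)}" by (rule filt_cof)
  have tY: "topspace conv_seq = UNIV" unfolding conv_seq_def using fs_top[OF fC] .
  have tX: "topspace (gap_space B) = UNIV" using gap_top .
  have oY: "openin conv_seq V \<longleftrightarrow> (None \<in> V \<longrightarrow> (\<exists>A. finite (- A) \<and> insert None (Some ` A) \<subseteq> V))" for V
    unfolding conv_seq_def fs_open[OF fC] by blast
  have ne: "phi y \<noteq> {}" for y using L tY unfolding lsc_def by blast
  have lscN: "\<exists>A0. finite (- A0) \<and> (\<forall>n\<in>A0. phi (Some n) \<inter> W \<noteq> {})"
    if W: "openin (gap_space B) W" "phi None \<inter> W \<noteq> {}" for W
  proof -
    have "openin conv_seq {y \<in> topspace conv_seq. phi y \<inter> W \<noteq> {}}" using L W(1) unfolding lsc_def by blast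
    hence "openin conv_seq {y. phi y \<inter> W \<noteq> {}}" using tY by simp
    moreover have "None \<in> {y. phi y \<inter> W \<noteq> {}}" using W(2) by simp
    ultimately obtain A0 where "finite (- A0)" "insert None (Some ` A0) \<subseteq> {y. phi y \<inter> W \<noteq> {}}"
      unfolding oY by blast
    thus ?thesis by blast
  qed
  have contI: "continuous_map conv_seq (gap_space B) s" if H: "\<And>V. openin (gap_space B) V \<Longrightarrow> s None \<in> V \<Longrightarrow>
       \<exists>A0. finite (- A0) \<and> (\<forall>n\<in>A0. s (Some n) \<in> V)" for s
    unfolding cont_UNIV[OF tX tY]
  proof (intro allI impI)
    fix V assume V: "openin (gap_space B) V"
    show "openin conv_seq (s -` V)" unfolding oY
    proof
      assume "None \<in> s -` V"
      then obtain A0 where "finite (- A0)" "\<forall>n\<in>A0. s (Some n) \<in> V" using H[OF V] by auto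
      thus "\<exists>A. finite (- A) \<and> insert None (Some ` A) \<subseteq> s -` V" using \<open>None \<in> s -` V\<close> by blast
    qed
  qed
  show "\<exists>s. continuous_map conv_seq (gap_space B) s \<and> (\<forall>y\<in>topspace conv_seq. s y \<in> phi y)"
  proof (cases "\<exists>k. Some k \<in> phi None")
    case True
    then obtain k where k: "Some k \<in> phi None" by blast
    define s where "s = (\<lambda>y. if Some k \<in> phi y then Some k else (SOME z. z \<in> phi y))"
    have ssel: "s y \<in> phi y" for y
    proof (cases "Some k \<in> phi y")
      case True thus ?thesis unfolding s_def by simp
    next
      case False
      hence "s y = (SOME z. z \<in> phi y)" unfolding s_def by simp
      thus ?thesis using ne[of y] by (simp add: some_in_eq)
    qed
    have "continuous_map conv_seq (gap_space B) s"
    proof (rule contI)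
      fix V assume V: "openin (gap_space B) V" "s None \<in> V"
      have sN: "s None = Some k" unfolding s_def using k by simp
      have ok: "openin (gap_space B) {Some k}" unfolding gap_open by blast
      obtain A0 where A0: "finite (- A0)" "\<forall>n\<in>A0. phi (Some n) \<inter> {Some k} \<noteq> {}" using lscN[OF ok] k by blast
      have "\<forall>n\<in>A0. s (Some n) \<in> V"
      proof
        fix n assume "n \<in> A0"
        hence "Some k \<in> phi (Some n)" using A0(2) by blast
        hence "s (Some n) = Some k" unfolding s_def by simp
        thus "s (Some n) \<in> V" using V(2) sN by simp
      qed
      thus "\<exists>A0. finite (- A0) \<and> (\<forall>n\<in>A0. s (Some n) \<in> V)" using A0(1) by blast
    qed
    thus ?thesis using ssel by blast
  next
    case False
    have NN: "None \<in> phi None"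
    proof -
      obtain z where "z \<in> phi None" using ne[of None] by blast
      thus ?thesis using False by (cases z) auto
    qed
    define M where "M = {n. None \<notin> phi (Some n)}"
    define psi where "psi = (\<lambda>n. {k. Some k \<in> phi (Some n)})"
    have cof: "\<exists>A0. finite (- A0) \<and> (\<forall>n\<in>A0 \<inter> M. psi n \<inter> \<Inter>(B ` F) \<noteq> {})" if F: "okF F" for F
    proof -
      obtain A0 where A0: "finite (- A0)" "\<forall>n\<in>A0. phi (Some n) \<inter> nbh B F \<noteq> {}"
        using lscN[OF gap_basic[OF F]] NN nbh_None by blast
      have "\<forall>n\<in>A0 \<inter> M. psi n \<inter> \<Inter>(B ` F) \<noteq> {}"
      proof
        fix n assume n: "n \<in> A0 \<inter> M"
        then obtain z where z: "z \<in> phi (Some n)" "z \<in> nbh B F" using A0(2) by blast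
        have "z \<noteq> None"
        proof
          assume "z = None" thus False using z(1) n unfolding M_def by simp
        qed
        then obtain k where "z = Some k" by blast
        hence "k \<in> psi n" "k \<in> \<Inter>(B ` F)" using z nbh_Some unfolding psi_def by auto
        thus "psi n \<inter> \<Inter>(B ` F) \<noteq> {}" by blast
      qed
      thus ?thesis using A0(1) by blast
    qed
    define ak where "ak = (\<lambda>k. SOME a. a \<in> Field omega1 \<and> B a \<inter> colset k = {})"
    have ak: "ak k \<in> Field omega1 \<and> B (ak k) \<inter> colset k = {}" for k
    proof -
      have "\<exists>a. a \<in> Field omega1 \<and> B a \<inter> colset k = {}" using colrem by blast
      thus ?thesis unfolding ak_def by (rule someI_ex)
    qed
    have "countable (range ak)" by simp
    moreover have "range ak \<subseteq> Field omega1" using ak by blast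
    ultimately obtain g where g: "g \<in> Field omega1" "range ak \<subseteq> underS omega1 g" using o1_bounded by blast
    obtain a where a: "a \<in> Field omega1" "g \<in> underS omega1 a"
      "psigood (underS omega1 a) B psi M \<longrightarrow> SelK psi M (A a) \<or> KillK (underS omega1 a) B psi M (B a)"
      using psiH[OF g(1)] by blast
    have good: "psigood (underS omega1 a) B psi M" unfolding psigood_def
    proof (intro conjI allI impI ballI)
      fix n assume "n \<in> M"
      obtain z where z: "z \<in> phi (Some n)" using ne by blast
      have "z \<noteq> None"
      proof
        assume "z = None" thus False using z \<open>n \<in> M\<close> unfolding M_def by simp
      qed
      then obtain k where "z = Some k" by blast
      thus "psi n \<noteq> {}" using z unfolding psi_def by blast
    next
      fix F assume F: "finite F \<and> F \<noteq> {} \<and> F \<subseteq> underS omega1 a"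
      hence "okF F" unfolding okF_def using o1_underS_Field by blast
      then obtain A0 where A0: "finite (- A0)" "\<forall>n\<in>A0 \<inter> M. psi n \<inter> \<Inter>(B ` F) \<noteq> {}" using cof by blast
      have "{n \<in> M. psi n \<inter> \<Inter>(B ` F) = {}} \<subseteq> - A0" using A0(2) by blast
      thus "finite {n \<in> M. psi n \<inter> \<Inter>(B ` F) = {}}" using A0(1) finite_subset by blast
    next
      fix k
      have "ak k \<in> underS omega1 g" using g(2) by blast
      hence "ak k \<in> underS omega1 a" using a(2) o1_underS_trans by blast
      thus "\<exists>x\<in>underS omega1 a. B x \<inter> colset k = {}" using ak by blast
    qed
    have AaF: "almost_subset (A a) (\<Inter>(B ` F))" if F: "finite F" "F \<subseteq> Field omega1" for F
    proof -
      have "A a - \<Inter>(B ` F) \<subseteq> (\<Union>b\<in>F. A a - B b)" by blast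
      moreover have "finite (\<Union>b\<in>F. A a - B b)"
        using F fieldAB[OF a(1)] unfolding almost_subset_def by blast
      ultimately show ?thesis unfolding almost_subset_def using finite_subset by blast
    qed
    from a(3) good have "SelK psi M (A a) \<or> KillK (underS omega1 a) B psi M (B a)" by blast
    thus ?thesis
    proof
      assume "KillK (underS omega1 a) B psi M (B a)"
      then obtain F J where FJ: "finite F" "F \<subseteq> underS omega1 a" "J \<subseteq> M" "infinite J"
        "\<forall>n\<in>J. psi n \<inter> B a \<inter> \<Inter>(B ` F) = {}" unfolding KillK_def by blast
      have "okF (insert a F)" unfolding okF_def using FJ(1,2) a(1) o1_underS_Field by blast
      then obtain A0 where A0: "finite (- A0)" "\<forall>n\<in>A0 \<inter> M. psi n \<inter> \<Inter>(B ` insert a F) \<noteq> {}" using cof by blast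
      have "\<not> J \<subseteq> - A0" using A0(1) FJ(4) finite_subset by blast
      then obtain n where n: "n \<in> J" "n \<in> A0" by blast
      hence "psi n \<inter> \<Inter>(B ` insert a F) \<noteq> {}" using A0(2) FJ(3) by blast
      moreover have "\<Inter>(B ` insert a F) = B a \<inter> \<Inter>(B ` F)" by simp
      ultimately show ?thesis using FJ(5) n(1) by (simp add: Int_assoc)
    next
      assume "SelK psi M (A a)"
      then obtain sel where sel: "\<forall>n\<in>M. sel n \<in> psi n" "\<forall>x. finite {n\<in>M. sel n = x}" "sel ` M \<subseteq> A a"
        unfolding SelK_def by blast
      define s where "s = (\<lambda>y. case y of None \<Rightarrow> None | Some n \<Rightarrow> if n \<in> M then Some (sel n) else None)"
      have ssel: "s y \<in> phi y" for y
      proof (cases y)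
        case None thus ?thesis unfolding s_def using NN by simp
      next
        case (Some n)
        show ?thesis
        proof (cases "n \<in> M")
          case True thus ?thesis unfolding s_def Some using sel(1) unfolding psi_def by auto
        next
          case False thus ?thesis unfolding s_def Some M_def by simp
        qed
      qed
      have "continuous_map conv_seq (gap_space B) s"
      proof (rule contI)
        fix V assume V: "openin (gap_space B) V" "s None \<in> V"
        have "None \<in> V" using V(2) unfolding s_def by simp
        then obtain F where F: "okF F" "nbh B F \<subseteq> V" using V(1) unfolding gap_open by blast
        have F': "finite F" "F \<subseteq> Field omega1" using F(1) unfolding okF_def by blast+
        define Bad where "Bad = {n\<in>M. sel n \<notin> \<Inter>(B ` F)}"
        have "Bad \<subseteq> (\<Union>x\<in>A a - \<Inter>(B ` F). {n\<in>M. sel n = x})" unfolding Bad_def using sel(3) by blast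
        moreover have "finite (A a - \<Inter>(B ` F))" using AaF[OF F'] unfolding almost_subset_def .
        ultimately have "finite Bad" using sel(2) finite_subset by blast
        moreover have "\<forall>n\<in>- Bad. s (Some n) \<in> V"
        proof
          fix n assume n: "n \<in> - Bad"
          show "s (Some n) \<in> V"
          proof (cases "n \<in> M")
            case True
            hence "sel n \<in> \<Inter>(B ` F)" using n unfolding Bad_def by blast
            hence "Some (sel n) \<in> V" using F(2) nbh_Some by blast
            thus ?thesis unfolding s_def using True by simp
          next
            case False thus ?thesis unfolding s_def using \<open>None \<in> V\<close> by simp
          qed
        qed
        ultimately show "\<exists>A0. finite (- A0) \<and> (\<forall>n\<in>A0. s (Some n) \<in> V)" by (metis double_compl)
      qed
      thus ?thesis using ssel by blast
    qed
  qed
qed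


definition decpsi :: "nat set \<Rightarrow> (nat \<Rightarrow> nat set) \<times> nat set" where
  "decpsi S = ((\<lambda>n. {k. pt 1 (pt n k) \<in> S}), {n. pt 0 n \<in> S})"
definition codepsi :: "(nat \<Rightarrow> nat set) \<Rightarrow> nat set \<Rightarrow> nat set \<Rightarrow> nat set" where
  "codepsi psi M T = {pt 1 (pt n k) | n k. k \<in> psi n} \<union> {pt 0 n | n. n \<in> M} \<union> {pt 2 t | t. t \<in> T}"
definition decc :: "nat set \<Rightarrow> nat" where "decc S = (LEAST k. k \<in> S)"

lemma decc_single: "decc {k} = k" unfolding decc_def by (rule Least_equality) auto

lemma decpsi_code: "decpsi (codepsi psi M T) = (psi, M)"
proof -
  have "{k. pt 1 (pt n k) \<in> codepsi psi M T} = psi n" for n unfolding codepsi_def by auto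
  moreover have "{n. pt 0 n \<in> codepsi psi M T} = M" unfolding codepsi_def by auto
  ultimately show ?thesis unfolding decpsi_def by auto
qed

lemma codepsi_inj: "inj (codepsi psi M)"
proof (rule injI)
  fix T1 T2 assume e: "codepsi psi M T1 = codepsi psi M T2"
  have "t \<in> T \<longleftrightarrow> pt 2 t \<in> codepsi psi M T" for t T unfolding codepsi_def by auto
  thus "T1 = T2" using e by blast
qed

lemma many_codes:
  assumes e: "bij_betw e (Field omega1) (UNIV :: nat set set)" and g: "g \<in> Field omega1"
  shows "\<exists>a\<in>Field omega1. g \<in> underS omega1 a \<and> decpsi (e a) = (psi, M)"
proof -
  define Cd where "Cd = {a\<in>Field omega1. decpsi (e a) = (psi, M)}"
  have esurj: "\<exists>a\<in>Field omega1. e a = S" for S using e unfolding bij_betw_def by (metis UNIV_I imageE)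
  have "range (codepsi psi M) \<subseteq> e ` Cd"
  proof
    fix S assume "S \<in> range (codepsi psi M)"
    then obtain T where T: "S = codepsi psi M T" by blast
    obtain a where a: "a \<in> Field omega1" "e a = S" using esurj by blast
    hence "a \<in> Cd" unfolding Cd_def using T decpsi_code by simp
    thus "S \<in> e ` Cd" using a(2) by blast
  qed
  have "\<not> countable Cd"
  proof
    assume "countable Cd"
    hence "countable (e ` Cd)" by simp
    hence "countable (range (codepsi psi M))" using \<open>range (codepsi psi M) \<subseteq> e ` Cd\<close> countable_subset by blast
    hence cU: "countable (UNIV :: nat set set)" using countable_image_inj_on codepsi_inj by blast
    have "e ` Field omega1 = UNIV" using e unfolding bij_betw_def by blast
    hence "countable (e ` Field omega1)" using cU by simp
    hence "countable (Field omega1)" using countable_image_inj_on e unfolding bij_betw_def by blast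
    thus False using o1_Field_uncountable by blast
  qed
  moreover have "countable (insert g (underS omega1 g))" using o1_underS_countable[OF g] by simp
  ultimately have "\<not> Cd \<subseteq> insert g (underS omega1 g)" using countable_subset by blast
  then obtain a where a: "a \<in> Cd" "a \<notin> insert g (underS omega1 g)" by blast
  have aF: "a \<in> Field omega1" using a(1) unfolding Cd_def by blast
  have "g \<in> underS omega1 a" using o1_cases[OF aF g] a(2) by blast
  thus ?thesis using a(1) aF unfolding Cd_def by blast
qed

lemma img_cong_sub: "\<forall>x\<in>P. B x = B' x \<Longrightarrow> F \<subseteq> P \<Longrightarrow> \<Inter>(B ` F) = \<Inter>(B' ` F)"
proof -
  assume "\<forall>x\<in>P. B x = B' x" "F \<subseteq> P"
  hence "B ` F = B' ` F" by (intro image_cong) auto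
  thus ?thesis by simp
qed

lemma psigood_cong: "\<forall>x\<in>P. B x = B' x \<Longrightarrow> psigood P B psi M = psigood P B' psi M"
proof -
  assume eq: "\<forall>x\<in>P. B x = B' x"
  have a: "(\<forall>F. finite F \<and> F \<noteq> {} \<and> F \<subseteq> P \<longrightarrow> finite {n\<in>M. psi n \<inter> \<Inter>(B ` F) = {}}) =
           (\<forall>F. finite F \<and> F \<noteq> {} \<and> F \<subseteq> P \<longrightarrow> finite {n\<in>M. psi n \<inter> \<Inter>(B' ` F) = {}})"
    apply (rule iff_allI) apply (rule imp_cong[OF refl]) using img_cong_sub[OF eq] by simp
  have b: "(\<forall>k. \<exists>x\<in>P. B x \<inter> colset k = {}) = (\<forall>k. \<exists>x\<in>P. B' x \<inter> colset k = {})" using eq by auto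
  show ?thesis unfolding psigood_def using a b by simp
qed

lemma KillK_cong: "\<forall>x\<in>P. B x = B' x \<Longrightarrow> KillK P B psi M B'' = KillK P B' psi M B''"
proof -
  assume eq: "\<forall>x\<in>P. B x = B' x"
  have "(finite F \<and> F \<subseteq> P \<and> J \<subseteq> M \<and> infinite J \<and> (\<forall>n\<in>J. psi n \<inter> B'' \<inter> \<Inter>(B ` F) = {})) =
        (finite F \<and> F \<subseteq> P \<and> J \<subseteq> M \<and> infinite J \<and> (\<forall>n\<in>J. psi n \<inter> B'' \<inter> \<Inter>(B' ` F) = {}))" for F J
  proof (cases "F \<subseteq> P")
    case True thus ?thesis using img_cong_sub[OF eq True] by simp
  next
    case False thus ?thesis by simp
  qed
  thus ?thesis unfolding KillK_def by simp
qed

lemma stspec_cong: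
  assumes eA: "\<forall>x\<in>P. A x = A' x" and eB: "\<forall>x\<in>P. B x = B' x"
  shows "stspec U Q P A B E f psi M c A'' B'' = stspec U Q P A' B' E f psi M c A'' B''"
proof -
  have b1: "(\<forall>x\<in>P. almost_subset (A x) A'' \<and> almost_subset A'' (B x) \<and> almost_subset B'' (B x)) =
            (\<forall>x\<in>P. almost_subset (A' x) A'' \<and> almost_subset A'' (B' x) \<and> almost_subset B'' (B' x))"
    using eA eB by auto
  have b2: "(\<forall>x\<in>P. almost_subset E (B x)) = (\<forall>x\<in>P. almost_subset E (B' x))" using eB by auto
  show ?thesis unfolding stspec_def using b1 b2 psigood_cong[OF eB] KillK_cong[OF eB] by simp
qed

lemma stspec_parts:
  assumes "stspec U Q P A B E f psi M c A' B'"
  shows "\<forall>x\<in>P. almost_subset (A x) A' \<and> almost_subset A' (B x) \<and> almost_subset B' (B x)"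
    "invAB U Q A' B'"
    "(\<forall>x\<in>P. almost_subset E (B x)) \<and> almost_subset E Bbase \<longrightarrow> almost_subset E A' \<or> \<not> almost_subset E B'"
    "almost_subset B' E \<or> \<not> almost_subset A' E"
    "{n. pt n (f n) \<in> B'} \<notin> U"
    "B' \<inter> colset c = {}"
    "psigood P B psi M \<longrightarrow> SelK psi M A' \<or> KillK P B psi M B'"
  using assms unfolding stspec_def by blast+

theorem main_construction:
  assumes ch: "CH"
  shows "\<exists>U A B. P_point U \<and> tight_gap A B \<and>
           selective conv_seq (gap_space B) \<and> \<not> selective (filter_space U) (gap_space B)"
proof -
  obtain U where pp: "P_point U" using ppoint_exists[OF ch] by blast
  have u: "fu U" using pp pp_fu by blast
  obtain Q where Q: "Q \<subseteq> UNIV" "infinite Q" "Q \<notin> U" using fu_split[OF u infinite_UNIV_nat] by blast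
  obtain e where e: "bij_betw e (Field omega1) (UNIV :: nat set set)" using CH_bij[OF ch] by blast
  have esurj: "\<exists>a\<in>Field omega1. e a = S" for S using e unfolding bij_betw_def by (metis UNIV_I imageE)
  define ff where "ff = (\<lambda>a. decf (e a))"
  define ps where "ps = (\<lambda>a. fst (decpsi (e a)))"
  define Ms where "Ms = (\<lambda>a. snd (decpsi (e a)))"
  define cc where "cc = (\<lambda>a. decc (e a))"
  define good where "good = (\<lambda>(h :: nat set \<Rightarrow> nat set \<times> nat set) a v.
     stspec U Q (underS omega1 a) (\<lambda>x. fst (h x)) (\<lambda>x. snd (h x)) (e a) (ff a) (ps a) (Ms a) (cc a) (fst v) (snd v))"
  have "\<exists>h. \<forall>a\<in>Field omega1. good h a (h a)"
  proof (rule o1_recursion)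
    fix h h' :: "nat set \<Rightarrow> nat set \<times> nat set" and a v
    assume "a \<in> Field omega1" "\<forall>x\<in>underS omega1 a. h x = h' x"
    hence eA: "\<forall>x\<in>underS omega1 a. fst (h x) = fst (h' x)" and eB: "\<forall>x\<in>underS omega1 a. snd (h x) = snd (h' x)" by auto
    show "good h a v = good h' a v" unfolding good_def using stspec_cong[OF eA eB] by simp
  next
    fix h :: "nat set \<Rightarrow> nat set \<times> nat set" and a
    assume aF: "a \<in> Field omega1" and H: "\<forall>x\<in>underS omega1 a. good h x (h x)"
    define A where "A = (\<lambda>x. fst (h x))"
    define B where "B = (\<lambda>x. snd (h x))"
    have HS: "stspec U Q (underS omega1 x) A B (e x) (ff x) (ps x) (Ms x) (cc x) (A x) (B x)" if "x \<in> underS omega1 a" for x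
      using H that unfolding good_def A_def B_def by simp
    have hinv: "invAB U Q (A x) (B x)" if "x \<in> underS omega1 a" for x using stspec_parts(2)[OF HS[OF that]] .
    have hlt: "almost_subset (A y) (A x) \<and> almost_subset (A x) (B y) \<and> almost_subset (B x) (B y)"
      if "x \<in> underS omega1 a" "y \<in> underS omega1 x" for x y using stspec_parts(1)[OF HS[OF that(1)]] that(2) by blast
    have "histok U Q (underS omega1 a) A B" unfolding histok_def
    proof (intro conjI ballI)
      show "countable (underS omega1 a)" using o1_underS_countable[OF aF] .
    next
      fix x assume "x \<in> underS omega1 a" thus "invAB U Q (A x) (B x)" by (rule hinv)
    next
      fix x y assume x: "x \<in> underS omega1 a" and y: "y \<in> underS omega1 a"
      have xF: "x \<in> Field omega1" and yF: "y \<in> Field omega1" using x y o1_underS_Field by blast+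
      from o1_cases[OF xF yF] show "almost_subset (A x) (B y)"
      proof (elim disjE)
        assume "x = y" thus ?thesis using hinv[OF x] unfolding invAB_def by blast
      next
        assume xy: "x \<in> underS omega1 y"
        have "almost_subset (A x) (A y)" using hlt[OF y xy] by blast
        moreover have "almost_subset (A y) (B y)" using hinv[OF y] unfolding invAB_def by blast
        ultimately show ?thesis by (rule as_trans)
      next
        assume yx: "y \<in> underS omega1 x"
        thus ?thesis using hlt[OF x yx] by blast
      qed
    next
      show "aschain (B ` underS omega1 a)" unfolding aschain_def
      proof (intro ballI)
        fix X Y assume "X \<in> B ` underS omega1 a" "Y \<in> B ` underS omega1 a"
        then obtain x y where xy: "x \<in> underS omega1 a" "y \<in> underS omega1 a" "X = B x" "Y = B y" by blast
        have xF: "x \<in> Field omega1" and yF: "y \<in> Field omega1" using xy o1_underS_Field by blast+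
        from o1_cases[OF xF yF] show "almost_subset X Y \<or> almost_subset Y X"
        proof (elim disjE)
          assume "x = y" thus ?thesis using xy by simp
        next
          assume "x \<in> underS omega1 y" thus ?thesis using hlt[OF xy(2)] xy by blast
        next
          assume "y \<in> underS omega1 x" thus ?thesis using hlt[OF xy(1)] xy by blast
        qed
      qed
    qed
    then obtain A' B' where "stspec U Q (underS omega1 a) A B (e a) (ff a) (ps a) (Ms a) (cc a) A' B'"
      using stage[OF pp Q(3)] by blast
    hence "good h a (A', B')" unfolding good_def A_def B_def by simp
    thus "\<exists>v. good h a v" by blast
  qed
  then obtain h where h: "\<forall>a\<in>Field omega1. good h a (h a)" by blast
  define A where "A = (\<lambda>x. fst (h x))"
  define B where "B = (\<lambda>x. snd (h x))"
  have HS: "stspec U Q (underS omega1 a) A B (e a) (ff a) (ps a) (Ms a) (cc a) (A a) (B a)" if "a \<in> Field omega1" for a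
    using h that unfolding good_def A_def B_def by simp
  have inv: "almost_subset (Abase Q) (A a)" "B a \<subseteq> Bbase" "almost_subset (A a) (B a)" "col ` (A a) \<notin> U" "bigU U (B a)"
    if "a \<in> Field omega1" for a using stspec_parts(2)[OF HS[OF that]] unfolding invAB_def by blast+
  have lt: "almost_subset (A y) (A x) \<and> almost_subset (A x) (B y) \<and> almost_subset (B x) (B y)"
    if "x \<in> Field omega1" "y \<in> underS omega1 x" for x y using stspec_parts(1)[OF HS[OF that(1)]] that(2) by blast
  have fieldAB: "almost_subset (A x) (B y)" if xF: "x \<in> Field omega1" and yF: "y \<in> Field omega1" for x y
  proof -
    from o1_cases[OF xF yF] show ?thesis
    proof (elim disjE)
      assume "x = y" thus ?thesis using inv(3)[OF xF] by simp
    next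
      assume xy: "x \<in> underS omega1 y"
      have "almost_subset (A x) (A y)" using lt[OF yF xy] by blast
      thus ?thesis using inv(3)[OF yF] as_trans by blast
    next
      assume "y \<in> underS omega1 x" thus ?thesis using lt[OF xF] by blast
    qed
  qed
  have colrem: "\<exists>a\<in>Field omega1. B a \<inter> colset k = {}" for k
  proof -
    obtain a where a: "a \<in> Field omega1" "e a = {k}" using esurj by blast
    hence "cc a = k" unfolding cc_def using decc_single by simp
    thus ?thesis using stspec_parts(6)[OF HS[OF a(1)]] a(1) by auto
  qed
  have T1: "\<forall>a\<in>Field omega1. infinite (A a) \<and> infinite (B a)"
  proof
    fix a assume aF: "a \<in> Field omega1"
    have "infinite (Abase Q)" using Abase_inf[OF Q(2)] .
    hence iA: "infinite (A a)" using as_infinite inv(1)[OF aF] by blast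
    thus "infinite (A a) \<and> infinite (B a)" using as_infinite inv(3)[OF aF] by blast
  qed
  have T2: "\<forall>a\<in>Field omega1. \<forall>b\<in>Field omega1. olt a b \<longrightarrow>
         almost_subset (A a) (A b) \<and> almost_subset (B b) (B a) \<and> almost_subset (A b) (B a)"
  proof (intro ballI impI)
    fix a b assume aF: "a \<in> Field omega1" and bF: "b \<in> Field omega1" and ab: "olt a b"
    hence "a \<in> underS omega1 b" unfolding underS_def by blast
    thus "almost_subset (A a) (A b) \<and> almost_subset (B b) (B a) \<and> almost_subset (A b) (B a)" using lt[OF bF] by blast
  qed
  have T3: "\<forall>E. (\<forall>a\<in>Field omega1. almost_subset E (B a)) \<longrightarrow> (\<exists>b\<in>Field omega1. almost_subset E (A b))"
  proof (intro allI impI)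
    fix E assume EB: "\<forall>a\<in>Field omega1. almost_subset E (B a)"
    obtain a where a: "a \<in> Field omega1" "e a = E" using esurj by blast
    have "\<forall>x\<in>underS omega1 a. almost_subset E (B x)" using EB o1_underS_Field by blast
    moreover have "almost_subset E Bbase" using as_mono2[OF inv(2)[OF a(1)]] EB a(1) by blast
    ultimately have "almost_subset E (A a) \<or> \<not> almost_subset E (B a)" using stspec_parts(3)[OF HS[OF a(1)]] a(2) by simp
    thus "\<exists>b\<in>Field omega1. almost_subset E (A b)" using EB a(1) by blast
  qed
  have T4: "\<forall>E. (\<forall>a\<in>Field omega1. almost_subset (A a) E) \<longrightarrow> (\<exists>b\<in>Field omega1. almost_subset (B b) E)"
  proof (intro allI impI)
    fix E assume AE: "\<forall>a\<in>Field omega1. almost_subset (A a) E"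
    obtain a where a: "a \<in> Field omega1" "e a = E" using esurj by blast
    have "almost_subset (B a) E \<or> \<not> almost_subset (A a) E" using stspec_parts(4)[OF HS[OF a(1)]] a(2) by simp
    thus "\<exists>b\<in>Field omega1. almost_subset (B b) E" using AE a(1) by blast
  qed
  have TG: "tight_gap A B" unfolding tight_gap_def using T1 T2 T3 T4 by blast
  have NS: "\<not> selective (filter_space U) (gap_space B)"
  proof (rule not_sel[OF u colrem])
    fix a assume aF: "a \<in> Field omega1"
    show "bigU U (B a) \<and> colfin (B a)" using inv(5)[OF aF] colfin_subset[OF colfin_Bbase inv(2)[OF aF]] by blast
  next
    fix a b assume "a \<in> Field omega1" "b \<in> underS omega1 a"
    thus "almost_subset (B a) (B b)" using lt by blast
  next
    fix f :: "nat \<Rightarrow> nat"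
    obtain a where a: "a \<in> Field omega1" "e a = {pt n (f n) | n. True}" using esurj by blast
    hence "ff a = f" unfolding ff_def using decf_surj by simp
    thus "\<exists>a\<in>Field omega1. {n. pt n (f n) \<in> B a} \<notin> U" using stspec_parts(5)[OF HS[OF a(1)]] a(1) by auto
  qed
  have SE: "selective conv_seq (gap_space B)"
  proof (rule is_sel[OF fieldAB colrem])
    fix psi M g assume g: "g \<in> Field omega1"
    obtain a where a: "a \<in> Field omega1" "g \<in> underS omega1 a" "decpsi (e a) = (psi, M)"
      using many_codes[OF e g] by blast
    have "ps a = psi" "Ms a = M" unfolding ps_def Ms_def using a(3) by simp_all
    thus "\<exists>a\<in>Field omega1. g \<in> underS omega1 a \<and>
        (psigood (underS omega1 a) B psi M \<longrightarrow> SelK psi M (A a) \<or> KillK (underS omega1 a) B psi M (B a))"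
      using stspec_parts(7)[OF HS[OF a(1)]] a(1,2) by auto
  qed
  show ?thesis using pp TG SE NS by blast
qed


theorem mainTheorem8:
  assumes "CH"
  shows "\<exists>U A B. P_point U \<and> tight_gap A B \<and>
           selective conv_seq (gap_space B) \<and> \<not> selective (filter_space U) (gap_space B)"
  using main_construction[OF assms] .

end
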